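(* Let $G$ be the finite graph associated to a finite b-quad-graph and let $\alpha:E(G)\to(0,\pi)$ be an admissible labelling. Let $\mathscr C$ and $\mathscr C^*$ be two circle patterns for $G$ and $\alpha$ all of whose circles are contained in the unit disc $\mathbb D$, with hyperbolic radius functions $r_{\mathrm{hyp}}$ and $r^*_{\mathrm{hyp}}$. If $r^*_{\mathrm{hyp}}(v)\ge r_{\mathrm{hyp}}(v)$ holds for every boundary vertex $v$ of $G$, then it holds for all vertices of $G$.
   Context: A b-quad-graph is a strongly regular cell decomposition into quadrilaterals with bipartite 1-skeleton (white and black vertices); $G$ is the graph on white vertices, adjacent iff incident to a common face, so edges of $G$ correspond to faces. A labelling is admissible if at each interior black vertex the labels of incident faces sum to $2\pi$. A circle pattern for $G$ and $\alpha$ assigns to each $v\in V(G)$ a circle $\mathscr C(v)$ such that circles of adjacent vertices $v_1,v_2$ intersect with exterior intersection angle $\alpha([v_1,v_2])$ (angle at an intersection point between the radii to the two centers), the kites formed by the two centers and two intersection points being equally oriented and forming a pattern locally isomorphic to the b-quad-graph at interior vertices. For a circle contained in $\mathbb D$, its hyperbolic radius is its radius with respect to the Poincaré disc metric on $\mathbb D$. Boundary vertices of $G$ are the white vertices on the boundary of the cell decomposition. *)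

theory Defs
  imports Complex_Main
begin

text \<open>A finite b-quad-graph is given by a finite set F of (quadrilateral) faces and,
for each face f, its list of corners K f = [w1, b1, w2, b2] in the (coherent) cyclic
order of the oriented cell decomposition; positions 0 and 2 are white, 1 and 3 black.\<close>

definition dedges :: "('f \<Rightarrow> 'v list) \<Rightarrow> 'f \<Rightarrow> ('v \<times> 'v) set" where
  "dedges K f = {(K f ! i, K f ! ((i + 1) mod 4)) | i. i < 4}"

definition white_verts :: "'f set \<Rightarrow> ('f \<Rightarrow> 'v list) \<Rightarrow> 'v set" where
  "white_verts F K = {K f ! 0 | f. f \<in> F} \<union> {K f ! 2 | f. f \<in> F}"

definition black_verts :: "'f set \<Rightarrow> ('f \<Rightarrow> 'v list) \<Rightarrow> 'v set" where
  "black_verts F K = {K f ! 1 | f. f \<in> F} \<union> {K f ! 3 | f. f \<in> F}"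

definition adj_at :: "'f set \<Rightarrow> ('f \<Rightarrow> 'v list) \<Rightarrow> 'v \<Rightarrow> 'f \<Rightarrow> 'f \<Rightarrow> bool" where
  "adj_at F K v f g \<longleftrightarrow> f \<in> F \<and> g \<in> F \<and>
     (\<exists>x. ((v, x) \<in> dedges K f \<and> (x, v) \<in> dedges K g) \<or> ((x, v) \<in> dedges K f \<and> (v, x) \<in> dedges K g))"

definition adj :: "'f set \<Rightarrow> ('f \<Rightarrow> 'v list) \<Rightarrow> 'f \<Rightarrow> 'f \<Rightarrow> bool" where
  "adj F K f g \<longleftrightarrow> f \<in> F \<and> g \<in> F \<and> (\<exists>x y. (x, y) \<in> dedges K f \<and> (y, x) \<in> dedges K g)"

definition boundary_edge :: "'f set \<Rightarrow> ('f \<Rightarrow> 'v list) \<Rightarrow> 'v \<times> 'v \<Rightarrow> bool" where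
  "boundary_edge F K e \<longleftrightarrow> (\<exists>f\<in>F. e \<in> dedges K f) \<and> \<not> (\<exists>g\<in>F. prod.swap e \<in> dedges K g)"

definition boundary_verts :: "'f set \<Rightarrow> ('f \<Rightarrow> 'v list) \<Rightarrow> 'v set" where
  "boundary_verts F K = {v. \<exists>x. boundary_edge F K (v, x) \<or> boundary_edge F K (x, v)}"

definition interior_verts :: "'f set \<Rightarrow> ('f \<Rightarrow> 'v list) \<Rightarrow> 'v set" where
  "interior_verts F K = (\<Union>f\<in>F. set (K f)) - boundary_verts F K"

definition b_quad_graph :: "'f set \<Rightarrow> ('f \<Rightarrow> 'v list) \<Rightarrow> bool" where
  "b_quad_graph F K \<longleftrightarrow>
     finite F \<and>
     (\<forall>f\<in>F. length (K f) = 4 \<and> distinct (K f)) \<and>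
     \<comment> \<open>bipartite 1-skeleton (white/black)\<close>
     white_verts F K \<inter> black_verts F K = {} \<and>
     \<comment> \<open>coherent orientation; every edge lies in at most two faces\<close>
     (\<forall>f\<in>F. \<forall>g\<in>F. \<forall>e. e \<in> dedges K f \<and> e \<in> dedges K g \<longrightarrow> f = g) \<and>
     \<comment> \<open>strong regularity: two faces meet in nothing, a vertex, or a common edge\<close>
     (\<forall>f\<in>F. \<forall>g\<in>F. f \<noteq> g \<longrightarrow>
        card (set (K f) \<inter> set (K g)) \<le> 1 \<or>
        (\<exists>x y. set (K f) \<inter> set (K g) = {x, y} \<and> (x, y) \<in> dedges K f \<and> (y, x) \<in> dedges K g)) \<and>
     \<comment> \<open>manifold condition: the faces around each vertex form one fan\<close>
     (\<forall>v. \<forall>f\<in>F. \<forall>g\<in>F. v \<in> set (K f) \<and> v \<in> set (K g) \<longrightarrow> (adj_at F K v)\<^sup>*\<^sup>* f g) \<and>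
     \<comment> \<open>connected\<close>
     (\<forall>f\<in>F. \<forall>g\<in>F. (adj F K)\<^sup>*\<^sup>* f g) \<and>
     \<comment> \<open>finite decomposition of a planar domain: nonempty boundary\<close>
     boundary_verts F K \<noteq> {}"

text \<open>Admissible labelling of the edges of G (= faces) with values in (0, pi).\<close>
definition admissible :: "'f set \<Rightarrow> ('f \<Rightarrow> 'v list) \<Rightarrow> ('f \<Rightarrow> real) \<Rightarrow> bool" where
  "admissible F K \<alpha> \<longleftrightarrow>
     (\<forall>f\<in>F. 0 < \<alpha> f \<and> \<alpha> f < pi) \<and>
     (\<forall>b \<in> black_verts F K \<inter> interior_verts F K. (\<Sum>f\<in>{f\<in>F. b \<in> set (K f)}. \<alpha> f) = 2 * pi)"

text \<open>Angle of the kite of face f at the centre of the circle of the white corner at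
position i (i = 0 or 2): twice the angle at that centre in the triangle formed by the two
centres and an intersection point.\<close>
definition kite_angle :: "('f \<Rightarrow> 'v list) \<Rightarrow> ('v \<Rightarrow> complex) \<Rightarrow> ('v \<Rightarrow> complex) \<Rightarrow> 'f \<Rightarrow> nat \<Rightarrow> real" where
  "kite_angle K c p f i =
     2 * \<bar>Arg ((p (K f ! 1) - c (K f ! i)) / (c (K f ! ((i + 2) mod 4)) - c (K f ! i)))\<bar>"

text \<open>Circle pattern for (F,K) and alpha: circle with centre c w and radius r w for each white
vertex w, intersection points p b for black vertices b. For every face [w1,b1,w2,b2] the two
circles meet in the two points p b1, p b2 with exterior intersection angle alpha f (angle at
the intersection point between the radii to the centres); all kites (c w1, p b1, c w2, p b2)
have the same orientation s; and around each interior white vertex the kites fit together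
once (angle sum 2 pi), i.e. the pattern is locally isomorphic to the b-quad-graph (at interior
black vertices this follows from admissibility and equal orientation).\<close>
definition circle_pattern ::
  "'f set \<Rightarrow> ('f \<Rightarrow> 'v list) \<Rightarrow> ('f \<Rightarrow> real) \<Rightarrow> ('v \<Rightarrow> complex) \<Rightarrow> ('v \<Rightarrow> real) \<Rightarrow> ('v \<Rightarrow> complex) \<Rightarrow> bool" where
  "circle_pattern F K \<alpha> c r p \<longleftrightarrow>
     (\<forall>w\<in>white_verts F K. 0 < r w) \<and>
     (\<exists>s \<in> {1, -1::real}. \<forall>f\<in>F.
        (let w1 = K f ! 0; b1 = K f ! 1; w2 = K f ! 2; b2 = K f ! 3 in
           cmod (p b1 - c w1) = r w1 \<and> cmod (p b1 - c w2) = r w2 \<and>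
           cmod (p b2 - c w1) = r w1 \<and> cmod (p b2 - c w2) = r w2 \<and>
           p b1 \<noteq> p b2 \<and>
           (c w1 - p b1) / (c w2 - p b1) = complex_of_real (r w1 / r w2) * cis (s * \<alpha> f) \<and>
           (c w2 - p b2) / (c w1 - p b2) = complex_of_real (r w2 / r w1) * cis (s * \<alpha> f))) \<and>
     (\<forall>w \<in> white_verts F K \<inter> interior_verts F K.
        (\<Sum>f\<in>{f\<in>F. K f ! 0 = w}. kite_angle K c p f 0) +
        (\<Sum>f\<in>{f\<in>F. K f ! 2 = w}. kite_angle K c p f 2) = 2 * pi)"

text \<open>Poincare disc distance (metric 2|dz|/(1-|z|^2)).\<close>
definition hyp_dist :: "complex \<Rightarrow> complex \<Rightarrow> real" where
  "hyp_dist z w = 2 * artanh (cmod (z - w) / cmod (1 - cnj z * w))"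

definition hyp_radius :: "complex \<Rightarrow> real \<Rightarrow> real" where
  "hyp_radius c r = (THE \<rho>. \<exists>h. cmod h < 1 \<and>
      {z. cmod (z - c) = r} = {z. cmod z < 1 \<and> hyp_dist h z = \<rho>})"

end

theory Submission
  imports Defs "HOL-Analysis.Analysis"
begin

definition mob :: "complex \<Rightarrow> complex \<Rightarrow> complex" where
  "mob a z = (z - a) / (1 - cnj a * z)"
definition mA :: "complex \<Rightarrow> complex \<Rightarrow> real \<Rightarrow> real" where
  "mA a c r = (cmod (1 - c * cnj a))^2 - r^2 * (cmod a)^2"
definition mE :: "complex \<Rightarrow> complex \<Rightarrow> real \<Rightarrow> complex" where
  "mE a c r = ((1 - cnj c * a) * (c - a) + of_real r ^ 2 * a) / of_real (mA a c r)"
definition mR :: "complex \<Rightarrow> complex \<Rightarrow> real \<Rightarrow> real" where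
  "mR a c r = r * (1 - (cmod a)^2) / mA a c r"
definition kap :: "complex \<Rightarrow> real \<Rightarrow> real" where
  "kap c r = r / (1 + r^2 - (cmod c)^2)"

lemma nsq: "(complex_of_real (cmod z))^2 = z * cnj z"
  using complex_norm_square[of z] by simp

lemma nsq': "complex_of_real ((cmod z)^2) = z * cnj z"
  using complex_norm_square[of z] by simp

lemma mA_c: "complex_of_real (mA a c r) = (1 - c * cnj a) * (1 - cnj c * a) - (of_real r) ^ 2 * a * cnj a"
  unfolding mA_def of_real_diff of_real_mult of_real_power nsq by simp

lemma cnj_mE: "cnj (mE a c r) = ((1 - c * cnj a) * (cnj c - cnj a) + of_real r ^ 2 * cnj a) / of_real (mA a c r)"
  unfolding mE_def by simp

lemma mR_c: "complex_of_real (mR a c r) = of_real r * (1 - a * cnj a) / of_real (mA a c r)"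
  unfolding mR_def by (simp add: nsq)

lemma circ_abs:
  fixes a ca c cc z cz r X D D' :: complex
  assumes X: "X = (1 - c*ca)*(1 - cc*a) - r^2*a*ca" and Xn: "X \<noteq> 0"
   and D: "D = 1 - ca*z" "D \<noteq> 0" and D': "D' = 1 - a*cz" "D' \<noteq> 0"
  shows "((z-a)/D - ((1 - cc*a)*(c-a) + r^2*a)/X)*((cz - ca)/D' - ((1 - c*ca)*(cc - ca) + r^2*ca)/X) - (r*(1-a*ca)/X)^2
     = (1-a*ca)^2/(X*D*D') * ((z-c)*(cz-cc) - r^2)"
proof -
  have "((z-a)/D - ((1 - cc*a)*(c-a) + r^2*a)/X)*((cz - ca)/D' - ((1 - c*ca)*(cc - ca) + r^2*ca)/X) - (r*(1-a*ca)/X)^2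
    = (((z-a)*X - ((1 - cc*a)*(c-a) + r^2*a)*D)*((cz - ca)*X - ((1 - c*ca)*(cc - ca) + r^2*ca)*D') - (r*(1-a*ca))^2*D*D')/(X*X*D*D')"
    using Xn D D' by (simp add: field_simps power2_eq_square)
  also have "\<dots> = ((1-a*ca)^2 * X * ((z-c)*(cz-cc) - r^2))/(X*X*D*D')"
    apply (rule arg_cong[where f="\<lambda>t. t/(X*X*D*D')"])
    unfolding X D(1) D'(1) by algebra
  also have "\<dots> = (1-a*ca)^2/(X*D*D') * ((z-c)*(cz-cc) - r^2)"
    using Xn D D' by (simp add: field_simps power2_eq_square)
  finally show ?thesis .
qed

lemma a1ne: "cmod a < 1 \<Longrightarrow> 1 - a * cnj a \<noteq> 0"
proof
  assume a: "cmod a < 1" and "1 - a * cnj a = 0"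
  then have "complex_of_real ((cmod a)^2) = 1" unfolding nsq' by simp
  then have "(cmod a)^2 = 1" by (metis of_real_1 of_real_eq_iff)
  with a show False by (simp add: abs_square_eq_1)
qed

lemma cnj_ne: "1 - cnj a * z \<noteq> 0 \<Longrightarrow> 1 - a * cnj z \<noteq> 0"
  by (metis complex_cnj_cnj complex_cnj_diff complex_cnj_mult complex_cnj_one complex_cnj_zero)

lemma cnj_mob: "cnj (mob a z) = (cnj z - cnj a) / (1 - a * cnj z)"
  unfolding mob_def by simp

lemma nsqd: "complex_of_real ((cmod (x - y))^2) = (x - y) * (cnj x - cnj y)"
  unfolding nsq' by simp

lemma circ_eq:
  assumes A: "mA a c r \<noteq> 0" and d: "1 - cnj a * z \<noteq> 0"
  shows "(cmod (mob a z - mE a c r))^2 - (mR a c r)^2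
       = (1 - (cmod a)^2)^2 / (mA a c r * (cmod (1 - cnj a * z))^2) * ((cmod (z - c))^2 - r^2)"
proof -
  have d'': "1 - a * cnj z \<noteq> 0" using d by (rule cnj_ne)
  have A': "complex_of_real (mA a c r) \<noteq> 0" using A by simp
  have "complex_of_real ((cmod (mob a z - mE a c r))^2 - (mR a c r)^2)
     = (mob a z - mE a c r) * (cnj (mob a z) - cnj (mE a c r)) - (complex_of_real (mR a c r))^2"
    unfolding of_real_diff of_real_power nsq by simp
  also have "\<dots> = ((z-a)/(1 - cnj a * z) - ((1 - cnj c*a)*(c-a) + (of_real r)^2*a)/of_real (mA a c r))
       *((cnj z - cnj a)/(1 - a * cnj z) - ((1 - c*cnj a)*(cnj c - cnj a) + (of_real r)^2*cnj a)/of_real (mA a c r))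
       - (of_real r*(1-a*cnj a)/of_real (mA a c r))^2"
    unfolding cnj_mob cnj_mE mR_c by (simp add: mob_def mE_def)
  also have "\<dots> = (1-a*cnj a)^2/(of_real (mA a c r)*(1 - cnj a * z)*(1 - a * cnj z)) * ((z-c)*(cnj z-cnj c) - (of_real r)^2)"
    by (rule circ_abs[OF mA_c A' refl d refl d''])
  also have "\<dots> = complex_of_real ((1 - (cmod a)^2)^2 / (mA a c r * (cmod (1 - cnj a * z))^2) * ((cmod (z - c))^2 - r^2))"
    unfolding of_real_mult of_real_divide of_real_diff of_real_power nsq nsq' by simp
  finally show ?thesis using of_real_eq_iff by blast
qed

lemma normal_abs:
  fixes a ca c cc p cp r X D :: complex
  assumes h: "(p - c) * (cp - cc) = r^2"
   and X: "X = (1 - c*ca)*(1 - cc*a) - r^2*a*ca" and Xn: "X \<noteq> 0" and D: "D = 1 - ca * p" "D \<noteq> 0"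
  shows "((1 - cc*a)*(c-a) + r^2*a)/X - (p - a)/D = (1 - a*ca)*(c-p)*(1 - a*cp)/(X*D)"
  using Xn D apply (simp add: field_simps)
  using h unfolding X D(1) by algebra

lemma normal_eq:
  assumes a: "cmod a < 1" and A: "mA a c r \<noteq> 0" and d: "1 - cnj a * p \<noteq> 0" and r: "r \<noteq> 0"
    and h: "cmod (p - c) = r"
  shows "(mE a c r - mob a p) / of_real (mR a c r) = ((c - p) / of_real r) * ((1 - a * cnj p) / (1 - cnj a * p))"
proof -
  have A': "complex_of_real (mA a c r) \<noteq> 0" using A by simp
  have h': "(p - c) * (cnj p - cnj c) = (of_real r)^2"
    using arg_cong[OF h, of "\<lambda>t. (complex_of_real t)^2"] unfolding nsq by simp
  have e: "mE a c r - mob a p = (1 - a*cnj a)*(c-p)*(1 - a*cnj p)/(of_real (mA a c r)*(1 - cnj a * p))"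
    unfolding mE_def mob_def by (rule normal_abs[OF h' mA_c A' refl d])
  have ma: "1 - a * cnj a \<noteq> 0" using a by (rule a1ne)
  have r': "complex_of_real r \<noteq> 0" using r by simp
  have "(mE a c r - mob a p) / of_real (mR a c r) = ((1 - a*cnj a)*(c-p)*(1 - a*cnj p)/(of_real (mA a c r)*(1 - cnj a * p))) / (of_real r * (1 - a * cnj a) / of_real (mA a c r))"
    by (simp only: e mR_c)
  also have "\<dots> = ((c - p) / of_real r) * ((1 - a * cnj p) / (1 - cnj a * p))"
  proof -
    have aux: "\<And>u Q R A D rr :: complex. u \<noteq> 0 \<Longrightarrow> A \<noteq> 0 \<Longrightarrow> D \<noteq> 0 \<Longrightarrow> rr \<noteq> 0 \<Longrightarrow>
       (u * Q * R / (A * D)) / (rr * u / A) = (Q / rr) * (R / D)"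
      by (simp add: field_simps)
    show ?thesis by (rule aux[OF ma A' d r'])
  qed
  finally show ?thesis .
qed

lemma kap_abs:
  fixes a ca c cc r X :: complex
  assumes X: "X = (1 - c*ca)*(1 - cc*a) - r^2*a*ca" and Xn: "X \<noteq> 0"
  shows "1 + (r*(1-a*ca)/X)^2 - (((1 - cc*a)*(c-a) + r^2*a)/X) * (((1 - c*ca)*(cc - ca) + r^2*ca)/X)
     = (1 - a*ca)*(1 - c*cc + r^2)/X"
  using Xn apply (simp add: field_simps power2_eq_square)
  unfolding X by algebra

lemma kap_inv:
  assumes A: "mA a c r \<noteq> 0" and a: "cmod a < 1" and k: "1 + r^2 - (cmod c)^2 \<noteq> 0"
  shows "kap (mE a c r) (mR a c r) = kap c r"
proof -
  have A': "complex_of_real (mA a c r) \<noteq> 0" using A by simp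
  have "complex_of_real (1 + (mR a c r)^2 - (cmod (mE a c r))^2)
      = 1 + (complex_of_real (mR a c r))^2 - mE a c r * cnj (mE a c r)"
    unfolding of_real_add of_real_diff of_real_power nsq by simp
  also have "\<dots> = 1 + (of_real r*(1-a*cnj a)/of_real (mA a c r))^2 - (((1 - cnj c*a)*(c-a) + (of_real r)^2*a)/of_real (mA a c r)) * (((1 - c*cnj a)*(cnj c - cnj a) + (of_real r)^2*cnj a)/of_real (mA a c r))"
    unfolding mR_c cnj_mE by (simp add: mE_def)
  also have "\<dots> = (1 - a*cnj a)*(1 - c*cnj c + (of_real r)^2)/of_real (mA a c r)"
    by (rule kap_abs[OF mA_c A'])
  also have "\<dots> = complex_of_real ((1 - (cmod a)^2) * (1 + r^2 - (cmod c)^2) / mA a c r)"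
    unfolding of_real_mult of_real_divide of_real_diff of_real_add of_real_power nsq by simp
  finally have eq: "1 + (mR a c r)^2 - (cmod (mE a c r))^2 = (1 - (cmod a)^2) * (1 + r^2 - (cmod c)^2) / mA a c r"
    using of_real_eq_iff by blast
  have a2: "1 - (cmod a)^2 > 0" using a by (simp add: abs_square_less_1)
  have "kap (mE a c r) (mR a c r) = mR a c r / ((1 - (cmod a)^2) * (1 + r^2 - (cmod c)^2) / mA a c r)"
    unfolding kap_def eq ..
  also have "\<dots> = kap c r"
  proof -
    have aux: "\<And>r u k A::real. u \<noteq> 0 \<Longrightarrow> k \<noteq> 0 \<Longrightarrow> A \<noteq> 0 \<Longrightarrow> (r*u/A)/(u*k/A) = r/k"
      by (simp add: field_simps)
    show ?thesis unfolding mR_def kap_def using aux[of "1 - (cmod a)^2" "1 + r^2 - (cmod c)^2" "mA a c r" r] A a2 k by simp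
  qed
  finally show ?thesis .
qed

lemma mob_inv:
  assumes a: "cmod a < 1" and d: "1 - cnj a * z \<noteq> 0"
  shows "mob (-a) (mob a z) = z"
proof -
  have a1: "1 - a * cnj a \<noteq> 0" using a by (rule a1ne)
  have e1: "mob a z + a = z * (1 - a * cnj a) / (1 - cnj a * z)"
    unfolding mob_def using d by (simp add: field_simps)
  have e2: "1 + cnj a * mob a z = (1 - a * cnj a) / (1 - cnj a * z)"
    unfolding mob_def using d by (simp add: field_simps)
  have "mob (-a) (mob a z) = (mob a z + a) / (1 + cnj a * mob a z)" by (simp add: mob_def)
  also have "\<dots> = (z * (1 - a * cnj a) / (1 - cnj a * z)) / ((1 - a * cnj a) / (1 - cnj a * z))"
    unfolding e1 e2 ..
  also have "\<dots> = z"
  proof -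
    have aux: "\<And>z u D :: complex. u \<noteq> 0 \<Longrightarrow> D \<noteq> 0 \<Longrightarrow> (z * u / D) / (u / D) = z" by simp
    show ?thesis by (rule aux[OF a1 d])
  qed
  finally show ?thesis .
qed

lemma mob_norm:
  assumes d: "1 - cnj a * z \<noteq> 0"
  shows "1 - (cmod (mob a z))^2 = (1 - (cmod a)^2) * (1 - (cmod z)^2) / (cmod (1 - cnj a * z))^2"
proof -
  have d'': "1 - a * cnj z \<noteq> 0" using d by (rule cnj_ne)
  have "complex_of_real (1 - (cmod (mob a z))^2) = 1 - mob a z * cnj (mob a z)"
    unfolding of_real_diff of_real_power nsq by simp
  also have "\<dots> = ((1 - cnj a * z) * (1 - a * cnj z) - (z - a) * (cnj z - cnj a)) / ((1 - cnj a * z) * (1 - a * cnj z))"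
  proof -
    have aux: "\<And>X Y D D'::complex. D\<noteq>0 \<Longrightarrow> D'\<noteq>0 \<Longrightarrow> 1 - X/D*(Y/D') = (D*D' - X*Y)/(D*D')"
      by (simp add: field_simps)
    show ?thesis unfolding cnj_mob unfolding mob_def by (rule aux[OF d d''])
  qed
  also have "\<dots> = ((1 - a * cnj a) * (1 - z * cnj z)) / ((1 - cnj a * z) * (1 - a * cnj z))"
    by (rule arg_cong[where f="\<lambda>t. t / ((1 - cnj a * z) * (1 - a * cnj z))"]) algebra
  also have "\<dots> = complex_of_real ((1 - (cmod a)^2) * (1 - (cmod z)^2) / (cmod (1 - cnj a * z))^2)"
    unfolding of_real_mult of_real_divide of_real_diff of_real_power nsq by simp
  finally show ?thesis using of_real_eq_iff by blast
qed


lemma mA_pos: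
  assumes a: "cmod a < 1" and cr: "cmod c + r < 1" and r: "0 \<le> r"
  shows "0 < mA a c r"
proof -
  have "cmod (c * cnj a) = cmod c * cmod a" by (simp add: norm_mult)
  also have "\<dots> \<le> cmod c" using a by (simp add: mult_left_le)
  finally have "1 - cmod c \<le> cmod (1 - c * cnj a)"
    by (metis norm_one norm_triangle_ineq2 diff_le_eq add.commute le_diff_eq order_trans norm_minus_commute)
  then have g: "r * cmod a < cmod (1 - c * cnj a)"
    using cr r a by (smt (verit) mult_left_le norm_ge_zero)
  have "(r * cmod a)^2 < (cmod (1 - c * cnj a))^2"
    using g r by (simp add: power_strict_mono)
  then show ?thesis unfolding mA_def by (simp add: power_mult_distrib)
qed

lemma disc_ne: "cmod a < 1 \<Longrightarrow> cmod z < 1 \<Longrightarrow> 1 - cnj a * z \<noteq> 0"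
proof
  assume "cmod a < 1" "cmod z < 1" "1 - cnj a * z = 0"
  then have "cmod (cnj a * z) = 1" by (metis eq_iff_diff_eq_0 norm_one)
  moreover have "cmod (cnj a * z) < 1" using \<open>cmod a < 1\<close> \<open>cmod z < 1\<close>
    by (simp add: norm_mult) (metis abs_ge_zero abs_norm_cancel less_one mult_strict_mono' norm_ge_zero mult_1_left)
  ultimately show False by simp
qed

lemma mob_disc:
  assumes a: "cmod a < 1" and z: "cmod z < 1"
  shows "cmod (mob a z) < 1"
proof -
  have d: "1 - cnj a * z \<noteq> 0" using disc_ne a z .
  have "1 - (cmod (mob a z))^2 = (1 - (cmod a)^2) * (1 - (cmod z)^2) / (cmod (1 - cnj a * z))^2"
    by (rule mob_norm[OF d])
  also have "\<dots> > 0" using a z d by (simp add: abs_square_less_1)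
  finally show ?thesis by (simp add: abs_square_less_1)
qed

lemma mR_pos:
  assumes a: "cmod a < 1" and cr: "cmod c + r < 1" and r: "0 < r"
  shows "0 < mR a c r"
  using mA_pos[OF a cr] r a unfolding mR_def by (simp add: abs_square_less_1)

lemma circ_map:
  assumes a: "cmod a < 1" and cr: "cmod c + r < 1" and r: "0 \<le> r" and z: "cmod z < 1"
  shows "cmod (mob a z - mE a c r) = mR a c r \<longleftrightarrow> cmod (z - c) = r"
proof -
  have A: "0 < mA a c r" by (rule mA_pos[OF a cr r])
  have d: "1 - cnj a * z \<noteq> 0" using disc_ne a z .
  have e: "(cmod (mob a z - mE a c r))^2 - (mR a c r)^2
       = (1 - (cmod a)^2)^2 / (mA a c r * (cmod (1 - cnj a * z))^2) * ((cmod (z - c))^2 - r^2)"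
    by (rule circ_eq) (use A d in auto)
  have a2: "0 < 1 - (cmod a)^2" using a by (simp add: abs_square_less_1)
  have dd: "0 < cmod (1 - cnj a * z)" using d by simp
  have K: "(1 - (cmod a)^2)^2 / (mA a c r * (cmod (1 - cnj a * z))^2) > 0"
    using A dd a2 by (intro divide_pos_pos mult_pos_pos zero_less_power) auto
  have mR0: "0 \<le> mR a c r" unfolding mR_def using A r a2 by (intro divide_nonneg_pos mult_nonneg_nonneg) auto
  have "cmod (mob a z - mE a c r) = mR a c r \<longleftrightarrow> (cmod (mob a z - mE a c r))^2 - (mR a c r)^2 = 0"
    using mR0 by (smt (verit) norm_ge_zero power2_eq_iff_nonneg)
  also have "\<dots> \<longleftrightarrow> (cmod (z - c))^2 - r^2 = 0" unfolding e using K by (metis mult_eq_0_iff less_irrefl)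
  also have "\<dots> \<longleftrightarrow> cmod (z - c) = r" using r by (smt (verit) norm_ge_zero power2_eq_iff_nonneg)
  finally show ?thesis .
qed

lemma circ_in_disc:
  assumes cr: "cmod c + r < 1" and z: "cmod (z - c) = r"
  shows "cmod z < 1"
proof -
  have "cmod z \<le> cmod c + cmod (z - c)" by (metis add.commute diff_add_cancel norm_triangle_ineq)
  then show ?thesis using cr z by simp
qed

lemma circ_incl:
  assumes r: "0 < r" and h: "\<And>z. cmod (z - c) = r \<Longrightarrow> cmod (z - e) = \<rho>"
  shows "c = e \<and> r = \<rho>"
proof -
  define d where "d = c - e"
  have hh: "\<And>u. cmod u = 1 \<Longrightarrow> (cmod (d + of_real r * u))^2 = \<rho>^2"
  proof -
    fix u :: complex assume u: "cmod u = 1"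
    have "cmod ((c + of_real r * u) - c) = r" using u r by (simp add: norm_mult)
    then have "cmod ((c + of_real r * u) - e) = \<rho>" by (rule h)
    then show "(cmod (d + of_real r * u))^2 = \<rho>^2" unfolding d_def by (simp add: algebra_simps)
  qed
  have h1: "(Re d + r)^2 + (Im d)^2 = \<rho>^2" using hh[of 1] by (simp add: cmod_power2)
  have h2: "(Re d - r)^2 + (Im d)^2 = \<rho>^2" using hh[of "-1"] by (simp add: cmod_power2)
  have h3: "(Re d)^2 + (Im d + r)^2 = \<rho>^2" using hh[of "\<i>"] by (simp add: cmod_power2)
  have h4: "(Re d)^2 + (Im d - r)^2 = \<rho>^2" using hh[of "-\<i>"] by (simp add: cmod_power2)
  have "(Re d + r)^2 - (Re d - r)^2 = 4*r*Re d" by (simp add: power2_eq_square algebra_simps)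
  then have "4*r*Re d = 0" using h1 h2 by linarith
  then have "Re d = 0" using r by simp
  moreover have "(Im d + r)^2 - (Im d - r)^2 = 4*r*Im d" by (simp add: power2_eq_square algebra_simps)
  then have "4*r*Im d = 0" using h3 h4 by linarith
  then have "Im d = 0" using r by simp
  ultimately have d0: "d = 0" by (simp add: complex_eq_iff)
  then have "c = e" unfolding d_def by simp
  moreover have "cmod ((c + of_real r) - e) = \<rho>" by (rule h) (use r in simp)
  ultimately show ?thesis using r by simp
qed


definition hmu :: "complex \<Rightarrow> real \<Rightarrow> real" where
 "hmu c r = 2 / ((1 + (cmod c)^2 - r^2) + sqrt ((1 + (cmod c)^2 - r^2)^2 - 4*(cmod c)^2))"
definition hc :: "complex \<Rightarrow> real \<Rightarrow> complex" where "hc c r = of_real (hmu c r) * c"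
definition tt :: "complex \<Rightarrow> real \<Rightarrow> real" where "tt c r = mR (hc c r) c r"

lemma hc_props:
  assumes cr: "cmod c + r < 1" and r: "0 < r"
  shows "cmod (hc c r) < 1" "mE (hc c r) c r = 0"
proof -
  define k where "k = cmod c"
  define B where "B = 1 + k^2 - r^2"
  define S where "S = sqrt (B^2 - 4*k^2)"
  have k0: "0 \<le> k" unfolding k_def by simp
  have B2k: "B - 2*k > 0"
  proof -
    have "B - 2*k = (1 - k)^2 - r^2" unfolding B_def by (simp add: power2_eq_square algebra_simps)
    moreover have "r < 1 - k" using cr unfolding k_def by simp
    then have "r^2 < (1-k)^2" using r by (simp add: power_strict_mono)
    ultimately show ?thesis by simp
  qed
  have D: "B^2 - 4*k^2 = (B - 2*k)*(B + 2*k)" by (simp add: power2_eq_square algebra_simps)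
  have Dpos: "B^2 - 4*k^2 > 0" unfolding D using B2k k0 by simp
  have S0: "S \<ge> 0" unfolding S_def by (rule real_sqrt_ge_zero) (use Dpos in linarith)
  have SS: "S^2 = B^2 - 4*k^2" proof -
    have "0 \<le> B^2 - 4*k^2" using Dpos by linarith
    then show ?thesis unfolding S_def by (rule real_sqrt_pow2)
  qed
  have BS: "B + S > 0" using B2k k0 S0 by simp
  have mu: "hmu c r = 2 / (B + S)" unfolding hmu_def B_def S_def k_def ..
  have mupos: "hmu c r > 0" unfolding mu using BS by simp
  have "cmod (hc c r) = hmu c r * k" unfolding hc_def k_def using mupos by (simp add: norm_mult)
  also have "\<dots> = 2 * k / (B + S)" unfolding mu by simp
  also have "\<dots> < 1" using BS B2k S0 by (simp add: field_simps)
  finally show "cmod (hc c r) < 1" .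
  have quad: "k^2 * (hmu c r)^2 - B * hmu c r + 1 = 0"
  proof -
    have "k^2 * (hmu c r)^2 - B * hmu c r + 1 = (4*k^2 - 2*B*(B+S) + (B+S)^2) / (B+S)^2"
    proof -
      have aux: "\<And>k B X::real. X \<noteq> 0 \<Longrightarrow> k^2 * (2/X)^2 - B * (2/X) + 1 = (4*k^2 - 2*B*X + X^2) / X^2"
        by (simp add: field_simps power2_eq_square)
      show ?thesis unfolding mu using aux[of "B+S" k B] BS by simp
    qed
    also have "4*k^2 - 2*B*(B+S) + (B+S)^2 = 4*k^2 - B^2 + S^2" by (simp add: power2_eq_square algebra_simps)
    also have "\<dots> = 0" using SS by simp
    finally show ?thesis by simp
  qed
  have num: "(1 - cnj c * hc c r) * (c - hc c r) + of_real r ^ 2 * hc c r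
     = c * of_real (k^2 * (hmu c r)^2 - B * hmu c r + 1)"
  proof -
    have cc: "cnj c * c = of_real (k^2)" unfolding k_def using nsq[of c] by (simp add: mult.commute)
    have "(1 - cnj c * hc c r) * (c - hc c r) + of_real r ^ 2 * hc c r
        = c * ((1 - of_real (hmu c r) * (cnj c * c)) * (1 - of_real (hmu c r)) + of_real r ^ 2 * of_real (hmu c r))"
      unfolding hc_def by (simp add: algebra_simps)
    also have "\<dots> = c * of_real (k^2 * (hmu c r)^2 - B * hmu c r + 1)"
      unfolding cc B_def by (simp add: algebra_simps power2_eq_square)
    finally show ?thesis .
  qed
  show "mE (hc c r) c r = 0" unfolding mE_def num quad by simp
qed

lemma tt_props:
  assumes cr: "cmod c + r < 1" and r: "0 < r"
  shows "0 < tt c r" "tt c r < 1" "kap c r = tt c r / (1 + (tt c r)^2)"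
proof -
  have h1: "cmod (hc c r) < 1" and h0: "mE (hc c r) c r = 0" using hc_props[OF cr r] by auto
  show "0 < tt c r" unfolding tt_def by (rule mR_pos[OF h1 cr r])
  define z0 where "z0 = c + of_real r"
  have z0c: "cmod (z0 - c) = r" unfolding z0_def using r by simp
  have z0d: "cmod z0 < 1" by (rule circ_in_disc[OF cr z0c])
  have "cmod (mob (hc c r) z0 - mE (hc c r) c r) = mR (hc c r) c r"
    using circ_map[OF h1 cr _ z0d] r z0c by simp
  then have "cmod (mob (hc c r) z0) = tt c r" unfolding h0 tt_def by simp
  moreover have "cmod (mob (hc c r) z0) < 1" by (rule mob_disc[OF h1 z0d])
  ultimately show "tt c r < 1" by simp
  have A: "mA (hc c r) c r \<noteq> 0" using mA_pos[OF h1 cr] r by simp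
  have k: "1 + r^2 - (cmod c)^2 \<noteq> 0"
  proof -
    have "cmod c < 1" using cr r by simp
    then have "(cmod c)^2 < 1" by (simp add: abs_square_less_1)
    then show ?thesis by (smt (verit) zero_le_power2)
  qed
  have "kap c r = kap (mE (hc c r) c r) (mR (hc c r) c r)" using kap_inv[OF A h1 k] by simp
  then show "kap c r = tt c r / (1 + (tt c r)^2)" unfolding h0 tt_def kap_def by simp
qed

lemma artanh_less:
  fixes x y :: real
  assumes "-1 < x" "x < y" "y < 1"
  shows "artanh x < artanh y"
proof -
  have "(1 + x) / (1 - x) < (1 + y) / (1 - y)" using assms by (simp add: field_simps)
  moreover have "0 < (1 + x) / (1 - x)" using assms by simp
  ultimately have "ln ((1 + x) / (1 - x)) < ln ((1 + y) / (1 - y))" by simp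
  then show ?thesis unfolding artanh_def by simp
qed

lemma artanh_inj:
  fixes x y :: real
  assumes "-1 < x" "x < 1" "-1 < y" "y < 1" "artanh x = artanh y"
  shows "x = y"
  using artanh_less assms by (metis linorder_neqE_linordered_idom less_irrefl)

lemma kapt_inj:
  fixes x y :: real
  assumes "0 \<le> x" "x < 1" "0 \<le> y" "y < 1" "x / (1 + x^2) = y / (1 + y^2)"
  shows "x = y"
proof -
  have p1: "1 + x^2 > 0" "1 + y^2 > 0" by (simp_all add: add_pos_nonneg)
  have "x * (1 + y^2) = y * (1 + x^2)" using assms(5) p1 by (simp add: field_simps)
  then have "(x - y) * (1 - x*y) = 0" by (simp add: power2_eq_square algebra_simps)
  moreover have "x * y < 1" using assms by (metis mult_strict_mono' mult_1_left less_eq_real_def)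
  ultimately show ?thesis by simp
qed

lemma hyp_dist_mob: "hyp_dist h z = 2 * artanh (cmod (mob h z))"
  unfolding hyp_dist_def mob_def by (simp add: norm_divide norm_minus_commute)

lemma hyp_radius_eq:
  assumes cr: "cmod c + r < 1" and r: "0 < r"
  shows "hyp_radius c r = 2 * artanh (tt c r)"
  unfolding hyp_radius_def
proof (rule the_equality)
  have h1: "cmod (hc c r) < 1" and h0: "mE (hc c r) c r = 0" using hc_props[OF cr r] by auto
  have t1: "tt c r < 1" "0 < tt c r" using tt_props[OF cr r] by auto
  show "\<exists>h. cmod h < 1 \<and> {z. cmod (z - c) = r} = {z. cmod z < 1 \<and> hyp_dist h z = 2 * artanh (tt c r)}"
  proof (intro exI conjI)
    show "cmod (hc c r) < 1" by (rule h1)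
    show "{z. cmod (z - c) = r} = {z. cmod z < 1 \<and> hyp_dist (hc c r) z = 2 * artanh (tt c r)}"
    proof (intro set_eqI iffI)
      fix z assume "z \<in> {z. cmod (z - c) = r}"
      then have zc: "cmod (z - c) = r" by simp
      have zd: "cmod z < 1" by (rule circ_in_disc[OF cr zc])
      have "cmod (mob (hc c r) z) = tt c r"
        using circ_map[OF h1 cr _ zd] r zc unfolding h0 tt_def by simp
      then show "z \<in> {z. cmod z < 1 \<and> hyp_dist (hc c r) z = 2 * artanh (tt c r)}"
        using zd unfolding hyp_dist_mob by simp
    next
      fix z assume "z \<in> {z. cmod z < 1 \<and> hyp_dist (hc c r) z = 2 * artanh (tt c r)}"
      then have zd: "cmod z < 1" and hd: "artanh (cmod (mob (hc c r) z)) = artanh (tt c r)"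
        unfolding hyp_dist_mob by auto
      have "cmod (mob (hc c r) z) < 1" by (rule mob_disc[OF h1 zd])
      then have "cmod (mob (hc c r) z) = tt c r"
        using artanh_inj[OF _ _ _ _ hd] t1 by (smt (verit) norm_ge_zero)
      then show "z \<in> {z. cmod (z - c) = r}"
        using circ_map[OF h1 cr _ zd] r unfolding h0 tt_def by simp
    qed
  qed
next
  fix \<rho> assume "\<exists>h. cmod h < 1 \<and> {z. cmod (z - c) = r} = {z. cmod z < 1 \<and> hyp_dist h z = \<rho>}"
  then obtain h where h: "cmod h < 1" and hs: "{z. cmod (z - c) = r} = {z. cmod z < 1 \<and> hyp_dist h z = \<rho>}"
    by blast
  have t1: "tt c r < 1" "0 < tt c r" and kt: "kap c r = tt c r / (1 + (tt c r)^2)" using tt_props[OF cr r] by auto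
  have on: "\<And>z. cmod (z - c) = r \<Longrightarrow> cmod z < 1 \<and> 2 * artanh (cmod (mob h z)) = \<rho>"
    using hs unfolding hyp_dist_mob by blast
  define z0 where "z0 = c + of_real r"
  have z0c: "cmod (z0 - c) = r" unfolding z0_def using r by simp
  define t' where "t' = cmod (mob h z0)"
  have z0d: "cmod z0 < 1" and rho: "\<rho> = 2 * artanh t'" using on[OF z0c] unfolding t'_def by auto
  have t'1: "t' < 1" unfolding t'_def by (rule mob_disc[OF h z0d])
  have t'0: "0 \<le> t'" unfolding t'_def by simp
  have allt: "\<And>z. cmod (z - c) = r \<Longrightarrow> cmod (mob h z) = t'"
  proof -
    fix z assume zc: "cmod (z - c) = r"
    have zd: "cmod z < 1" and e: "2 * artanh (cmod (mob h z)) = \<rho>" using on[OF zc] by auto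
    have "cmod (mob h z) < 1" by (rule mob_disc[OF h zd])
    moreover have "-1 < cmod (mob h z)" by (smt (verit) norm_ge_zero)
    ultimately show "cmod (mob h z) = t'" using artanh_inj[of "cmod (mob h z)" t'] e rho t'1 t'0 by simp
  qed
  have t'pos: "0 < t'"
  proof (rule ccontr)
    assume "\<not> 0 < t'"
    then have t0: "t' = 0" using t'0 by simp
    define z1 where "z1 = c - of_real r"
    have z1c: "cmod (z1 - c) = r" unfolding z1_def using r by simp
    have "mob h z0 = 0" "mob h z1 = 0" using allt[OF z0c] allt[OF z1c] t0 by auto
    moreover have "1 - cnj h * z0 \<noteq> 0" "1 - cnj h * z1 \<noteq> 0"
      using disc_ne h z0d circ_in_disc[OF cr z1c] by auto
    ultimately have "z0 = h" "z1 = h" unfolding mob_def by auto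
    then show False unfolding z0_def z1_def using r by (simp add: complex_eq_iff)
  qed
  have hm: "cmod (-h) < 1" using h by simp
  have crt: "cmod 0 + t' < 1" using t'1 by simp
  have incl: "\<And>z. cmod (z - c) = r \<Longrightarrow> cmod (z - mE (-h) 0 t') = mR (-h) 0 t'"
  proof -
    fix z assume zc: "cmod (z - c) = r"
    have zd: "cmod z < 1" by (rule circ_in_disc[OF cr zc])
    have w1: "cmod (mob h z) < 1" by (rule mob_disc[OF h zd])
    have "cmod (mob (-h) (mob h z) - mE (-h) 0 t') = mR (-h) 0 t'"
      using circ_map[OF hm crt _ w1] t'0 allt[OF zc] by simp
    moreover have "mob (-h) (mob h z) = z" by (rule mob_inv[OF h disc_ne[OF h zd]])
    ultimately show "cmod (z - mE (-h) 0 t') = mR (-h) 0 t'" by simp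
  qed
  have ce: "c = mE (-h) 0 t' \<and> r = mR (-h) 0 t'" by (rule circ_incl[OF r incl])
  have A: "mA (-h) 0 t' \<noteq> 0" using mA_pos[OF hm crt] t'0 by simp
  have k: "1 + t'^2 - (cmod 0)^2 \<noteq> 0" by (simp add: add_pos_nonneg) (smt (verit) zero_le_power2)
  have "kap c r = kap 0 t'" using ce kap_inv[OF A hm k] by simp
  then have "tt c r / (1 + (tt c r)^2) = t' / (1 + t'^2)" using kt unfolding kap_def by simp
  then have "tt c r = t'" using kapt_inj t1 t'0 t'1 by (metis less_eq_real_def)
  then show "\<rho> = 2 * artanh (tt c r)" using rho by simp
qed


lemma ArgC:
  assumes D: "0 < D"
  shows "Arg (Complex N D) = pi/2 - arctan (N/D)"
proof (rule cis_Arg_unique)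
  define q where "q = sqrt (1 + (N/D)^2)"
  have pos: "0 < q" unfolding q_def by (simp add: add_pos_nonneg)
  have m: "cmod (Complex N D) = D * q"
  proof -
    have "N^2 + D^2 = D^2 * (1 + (N/D)^2)" using D by (simp add: field_simps power2_eq_square)
    then have "sqrt (N^2 + D^2) = sqrt (D^2) * q" unfolding q_def by (simp add: real_sqrt_mult)
    then show ?thesis using D by (simp add: cmod_def)
  qed
  have z: "Complex N D \<noteq> 0" using D by (simp add: complex_eq_iff)
  have c1: "cos (pi/2 - arctan (N/D)) = sin (arctan (N/D))" by (simp add: sin_cos_eq)
  have sa: "sin (arctan (N/D)) = (N/D) / q" unfolding q_def by (rule sin_arctan)
  have ca: "cos (arctan (N/D)) = 1 / q" unfolding q_def by (rule cos_arctan)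
  have s1: "sin (pi/2 - arctan (N/D)) = cos (arctan (N/D))" by (simp add: cos_sin_eq)
  show "sgn (Complex N D) = cis (pi/2 - arctan (N/D))"
  proof (rule complex_eqI)
    show "Re (sgn (Complex N D)) = Re (cis (pi / 2 - arctan (N / D)))"
      unfolding Re_sgn m cis.sel c1 sa using D pos by (simp add: field_simps)
    show "Im (sgn (Complex N D)) = Im (cis (pi / 2 - arctan (N / D)))"
      unfolding Im_sgn m cis.sel s1 ca using D pos by (simp add: field_simps)
  qed
  show "- pi < pi / 2 - arctan (N / D)" using arctan_ubound[of "N/D"] pi_gt_zero by linarith
  show "pi / 2 - arctan (N / D) \<le> pi" using arctan_lbound[of "N/D"] pi_gt_zero by linarith
qed

definition thk :: "real \<Rightarrow> real \<Rightarrow> real \<Rightarrow> real" where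
  "thk a b u = Arg (Complex (a*(1+b^2) - b*cos u*(1+a^2)) (b * sin u*(1-a^2)))"

definition fth :: "real \<Rightarrow> real \<Rightarrow> real \<Rightarrow> real" where
  "fth a b u = (a*(1+b^2) - b*cos u*(1+a^2)) / (b * sin u*(1-a^2))"

lemma thk_arctan:
  assumes "0 < a" "a < 1" "0 < b" "0 < u" "u < pi"
  shows "thk a b u = pi/2 - arctan (fth a b u)"
proof -
  have "sin u > 0" using assms by (simp add: sin_gt_zero)
  moreover have "1 - a^2 > 0" using assms by (simp add: abs_square_less_1)
  ultimately have "b * sin u*(1-a^2) > 0" using assms by simp
  then show ?thesis unfolding thk_def fth_def by (rule ArgC)
qed

lemma thk_range:
  assumes "0 < a" "a < 1" "0 < b" "0 < u" "u < pi"
  shows "0 < thk a b u" "thk a b u < pi"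
  using thk_arctan[OF assms] arctan_bounded[of "fth a b u"] by auto

lemma fth_mono_a:
  assumes a: "0 < a'" "a' < a" "a < 1" and b: "0 < b" "b < 1" and u: "0 < u" "u < pi"
  shows "fth a' b u < fth a b u"
proof -
  define c where "c = cos u"
  define s where "s = sin u"
  have s: "s > 0" unfolding s_def using u by (simp add: sin_gt_zero)
  have c1: "c < 1" unfolding c_def using u by (smt (verit) cos_monotone_0_pi cos_zero)
  define be where "be = (1 + b^2) / b"
  have be2: "be \<ge> 2"
  proof -
    have "(1 - b)^2 \<ge> 0" by simp
    then have "1 + b^2 \<ge> 2 * b" by (simp add: power2_eq_square algebra_simps)
    then show ?thesis unfolding be_def using b by (simp add: field_simps)
  qed
  have fr: "\<And>x. 0 < x \<Longrightarrow> x < 1 \<Longrightarrow> fth x b u = (be * x - c * (1 + x^2)) / (1 - x^2) / s"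
  proof -
    fix x :: real assume x: "0 < x" "x < 1"
    have "1 - x^2 > 0" using x by (simp add: abs_square_less_1)
    then show "fth x b u = (be * x - c * (1 + x^2)) / (1 - x^2) / s"
      unfolding fth_def be_def c_def s_def using b s by (simp add: field_simps s_def)
  qed
  have d1: "1 - a'^2 > 0" "1 - a^2 > 0" using a by (simp_all add: abs_square_less_1)
  have key: "(be * a' - c * (1 + a'^2)) * (1 - a^2) < (be * a - c * (1 + a^2)) * (1 - a'^2)"
  proof -
    have "(be * a - c * (1 + a^2)) * (1 - a'^2) - (be * a' - c * (1 + a'^2)) * (1 - a^2)
        = (a - a') * (be * (1 + a*a') - 2 * c * (a + a'))"
      by (simp add: power2_eq_square algebra_simps)
    moreover have "be * (1 + a*a') - 2 * c * (a + a') > 0"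
    proof -
      have "(1 - a) * (1 - a') > 0" using a by simp
      then have h: "1 + a*a' > a + a'" by (simp add: algebra_simps)
      have "be * (1 + a*a') \<ge> 2 * (1 + a*a')" using mult_right_mono[OF be2, of "1 + a*a'"] a by simp
      moreover have "2 * c * (a + a') < 2 * (1 + a*a')"
      proof (cases "c \<le> 0")
        case True then show ?thesis using a by (smt (verit) mult_nonneg_nonneg mult_nonpos_nonneg)
      next
        case False
        then have "c * (a + a') < 1 * (a + a')" using c1 a by (intro mult_strict_right_mono) auto
        then show ?thesis using h by simp
      qed
      ultimately show ?thesis by simp
    qed
    ultimately show ?thesis using a by (smt (verit) mult_pos_pos)
  qed
  have "(be * a' - c * (1 + a'^2)) / (1 - a'^2) < (be * a - c * (1 + a^2)) / (1 - a^2)"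
    using key d1 by (simp add: divide_simps mult.commute)
  then have "(be * a' - c * (1 + a'^2)) / (1 - a'^2) / s < (be * a - c * (1 + a^2)) / (1 - a^2) / s"
    using s by (rule divide_strict_right_mono)
  then show ?thesis using fr[of a'] fr[of a] a by simp
qed

lemma fth_mono_b:
  assumes a: "0 < a" "a < 1" and b: "0 < b" "b \<le> b'" "b' < 1" and u: "0 < u" "u < pi"
  shows "fth a b' u \<le> fth a b u"
proof -
  define c where "c = cos u"
  define s where "s = sin u"
  have s: "s > 0" unfolding s_def using u by (simp add: sin_gt_zero)
  have d1: "1 - a^2 > 0" using a by (simp add: abs_square_less_1)
  have fr: "\<And>y. 0 < y \<Longrightarrow> fth a y u = (a * (y + 1/y) - c * (1 + a^2)) / ((1 - a^2) * s)"
    unfolding fth_def c_def s_def using s d1 by (simp add: field_simps power2_eq_square s_def)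
  have "b' + 1/b' \<le> b + 1/b"
  proof -
    have "(b + 1/b) - (b' + 1/b') = (b' - b) * (1 - b*b') / (b*b')" using b by (simp add: field_simps)
    moreover have "(b' - b) * (1 - b*b') / (b*b') \<ge> 0"
    proof -
      have "b * b' < 1" using b by (metis less_le_trans mult_strict_mono' mult_1_left less_eq_real_def)
      then show ?thesis using b by (intro divide_nonneg_pos mult_nonneg_nonneg) auto
    qed
    ultimately show ?thesis by simp
  qed
  then have "a * (b' + 1/b') - c * (1 + a^2) \<le> a * (b + 1/b) - c * (1 + a^2)" using a by simp
  then show ?thesis using fr[of b] fr[of b'] b d1 s by (simp add: divide_right_mono)
qed

lemma thk_mono:
  assumes a: "0 < a'" "a' < a" "a < 1" and b: "0 < b" "b \<le> b'" "b' < 1" and u: "0 < u" "u < pi"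
  shows "thk a b u < thk a' b' u"
proof -
  have "fth a' b' u \<le> fth a' b u" by (rule fth_mono_b) (use a b u in auto)
  also have "\<dots> < fth a b u" by (rule fth_mono_a) (use a b u in auto)
  finally have "arctan (fth a' b' u) < arctan (fth a b u)" by (simp add: arctan_less_iff)
  then show ?thesis using thk_arctan[of a b u] thk_arctan[of a' b' u] a b u by simp
qed


definition dl :: "real \<Rightarrow> real \<Rightarrow> real" where
  "dl x u = Arg (Complex (1 - x * cos u) (x * sin u))"

lemma dl_arctan:
  assumes "0 < x" "x < 1" "0 < u" "u < pi"
  shows "dl x u = pi/2 - arctan ((1 - x * cos u) / (x * sin u))"
  unfolding dl_def using assms by (intro ArgC) (simp add: sin_gt_zero)

lemma cos_lt1: "0 < u \<Longrightarrow> u < pi \<Longrightarrow> cos u < 1"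
  by (smt (verit) cos_monotone_0_pi cos_zero)
lemma cos_gtm1: "0 < u \<Longrightarrow> u < pi \<Longrightarrow> -1 < cos u"
  by (smt (verit) cos_monotone_0_pi cos_pi)

lemma dl_range:
  assumes x: "0 < x" "x < 1" and u: "0 < u" "u < pi"
  shows "0 < dl x u" "2 * dl x u < pi - u"
proof -
  define c where "c = cos u"
  define s where "s = sin u"
  have s: "0 < s" unfolding s_def using u by (simp add: sin_gt_zero)
  have c1: "c < 1" "-1 < c" unfolding c_def using cos_lt1 cos_gtm1 u by auto
  have xc: "x * c < 1"
  proof (cases "c \<le> 0")
    case True then show ?thesis using x by (smt (verit) mult_nonneg_nonpos)
  next
    case False then have "x * c < 1 * 1" using x c1 by (intro mult_strict_mono) auto
    then show ?thesis by simp
  qed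
  have v: "0 < (1 - x * c) / (x * s)" using xc x s by simp
  show "0 < dl x u" unfolding dl_arctan[OF x u] c_def[symmetric] s_def[symmetric]
    using arctan_ubound[of "(1 - x * c) / (x * s)"] by simp
  have t: "tan (u/2) = s / (1 + c)" unfolding s_def c_def using tan_half[of "u/2"] by (simp add: add.commute)
  have "s / (1 + c) < (1 - x * c) / (x * s)"
  proof -
    have ss: "s^2 = 1 - c^2" unfolding s_def c_def by (simp add: sin_squared_eq)
    have "x * (1 - c) < 1 - x * c" using x by (simp add: algebra_simps)
    then have "x * (1 - c) * (1 + c) < (1 - x * c) * (1 + c)" using c1 by (intro mult_strict_right_mono) auto
    moreover have e: "s * (x * s) = x * (1 - c) * (1 + c)"
    proof -
      have "s * (x * s) = x * s^2" by (simp add: power2_eq_square)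
      also have "\<dots> = x * (1 - c) * (1 + c)" unfolding ss by (simp add: power2_eq_square algebra_simps)
      finally show ?thesis .
    qed
    ultimately have "s * (x * s) < (1 - x * c) * (1 + c)" by (simp only: e)
    then show ?thesis using s x c1 by (simp add: divide_simps mult.commute)
  qed
  then have "arctan (tan (u/2)) < arctan ((1 - x * c) / (x * s))" unfolding t by (simp add: arctan_less_iff)
  moreover have "arctan (tan (u/2)) = u/2" using u by (intro arctan_tan) auto
  ultimately show "2 * dl x u < pi - u" unfolding dl_arctan[OF x u] c_def[symmetric] s_def[symmetric] by simp
qed

lemma dl_mono:
  assumes x: "0 < x'" "x' < x" "x < 1" and u: "0 < u" "u < pi"
  shows "dl x' u < dl x u"
proof -
  define c where "c = cos u"
  define s where "s = sin u"
  have s: "0 < s" unfolding s_def using u by (simp add: sin_gt_zero)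
  have "1/(x * s) < 1/(x' * s)" using x s by (simp add: divide_simps)
  then have "1/(x * s) - c/s < 1/(x' * s) - c/s" by simp
  moreover have "\<And>y. 0 < y \<Longrightarrow> (1 - y * c) / (y * s) = 1/(y * s) - c/s" using s by (simp add: field_simps)
  ultimately have "(1 - x * c) / (x * s) < (1 - x' * c) / (x' * s)" using x by simp
  then have "arctan ((1 - x * c) / (x * s)) < arctan ((1 - x' * c) / (x' * s))" by (simp add: arctan_less_iff)
  moreover have "0 < x" "x' < 1" using x by auto
  ultimately show ?thesis unfolding dl_arctan[OF \<open>0 < x\<close> x(3) u] dl_arctan[OF x(1) \<open>x' < 1\<close> u] c_def[symmetric] s_def[symmetric]
    by simp
qed

lemma cis_eq_range:
  assumes "cis x = cis y" "0 < x" "x < 2*pi" "0 < y" "y < 2*pi"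
  shows "x = y"
proof -
  have "cis (x - pi) = cis (y - pi)" using assms(1) by (simp add: cis_divide[symmetric])
  then have "Arg (cis (x - pi)) = Arg (cis (y - pi))" by simp
  then show ?thesis using assms by (simp add: Arg_cis)
qed

lemma thk_sum_eq:
  assumes a: "0 < a" "a < 1" and b: "0 < b" "b < 1" and u: "0 < u" "u < pi"
  shows "thk a b u + thk b a u = pi - u - 2 * dl (a*b) u"
proof -
  define w where "w = cis u"
  have ww: "w * cnj w = 1" unfolding w_def cis_cnj cis_mult by simp
  have wc: "w + cnj w = 2 * of_real (cos u)" unfolding w_def by (simp add: complex_eq_iff cis_cnj)
  define z1 where "z1 = Complex (a*(1+b^2) - b*cos u*(1+a^2)) (b * sin u*(1-a^2))"
  define z2 where "z2 = Complex (b*(1+a^2) - a*cos u*(1+b^2)) (a * sin u*(1-b^2))"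
  have z1e: "z1 = (of_real a - of_real b * cnj w) * (1 - of_real (a*b) * w)"
  proof -
    have "(of_real a - of_real b * cnj w) * (1 - of_real (a*b) * w) = of_real a + of_real a * (of_real b)^2 - (of_real a)^2 * of_real b * w - of_real b * cnj w"
      using ww by (simp add: power2_eq_square) algebra
    also have "\<dots> = z1" unfolding z1_def w_def by (simp add: complex_eq_iff cis_cnj algebra_simps power2_eq_square)
    finally show ?thesis by simp
  qed
  have z2e: "z2 = (of_real b - of_real a * cnj w) * (1 - of_real (a*b) * w)"
  proof -
    have "(of_real b - of_real a * cnj w) * (1 - of_real (a*b) * w) = of_real b + of_real b * (of_real a)^2 - (of_real b)^2 * of_real a * w - of_real a * cnj w"
      using ww by (simp add: power2_eq_square) algebra
    also have "\<dots> = z2" unfolding z2_def w_def by (simp add: complex_eq_iff cis_cnj algebra_simps power2_eq_square)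
    finally show ?thesis by simp
  qed
  define L where "L = a^2 + b^2 - 2*a*b*cos u"
  have Lpos: "L > 0"
  proof -
    have "L = (a - b)^2 + 2*a*b*(1 - cos u)" unfolding L_def by (simp add: power2_eq_square algebra_simps)
    moreover have "1 - cos u > 0" using cos_lt1 u by simp
    ultimately show ?thesis using a b by (smt (verit) mult_pos_pos zero_le_power2)
  qed
  have prod: "z1 * z2 = of_real L * (- cnj w) * (1 - of_real (a*b) * w)^2"
  proof -
    have f: "(of_real a - of_real b * cnj w) * (of_real b - of_real a * cnj w) = - cnj w * of_real L"
    proof -
      have "(of_real a - of_real b * cnj w) * (of_real b - of_real a * cnj w)
          = - cnj w * (of_real a ^ 2 + of_real b ^ 2 - of_real a * of_real b * (w + cnj w))"
        using ww by algebra
      then show ?thesis unfolding wc L_def by simp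
    qed
    have "z1 * z2 = ((of_real a - of_real b * cnj w) * (of_real b - of_real a * cnj w)) * (1 - of_real (a*b) * w)^2"
      unfolding z1e z2e by (simp add: power2_eq_square mult_ac)
    also have "\<dots> = (- cnj w * of_real L) * (1 - of_real (a*b) * w)^2" by (simp only: f)
    finally show ?thesis by (simp add: mult_ac)
  qed
  have sp: "0 < sin u" using u by (simp add: sin_gt_zero)
  have d1: "0 < b * sin u*(1-a^2)" using a b sp by (simp add: abs_square_less_1)
  have d2: "0 < a * sin u*(1-b^2)" using a b sp by (simp add: abs_square_less_1)
  have z1n: "z1 \<noteq> 0"
  proof
    assume "z1 = 0" then have "Im z1 = 0" by simp
    moreover have "Im z1 = b * sin u*(1-a^2)" unfolding z1_def by simp
    ultimately show False using d1 by linarith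
  qed
  have z2n: "z2 \<noteq> 0"
  proof
    assume "z2 = 0" then have "Im z2 = 0" by simp
    moreover have "Im z2 = a * sin u*(1-b^2)" unfolding z2_def by simp
    ultimately show False using d2 by linarith
  qed
  have ab: "0 < a*b" "a*b < 1" using a b by (simp_all add: mult_strict_mono' less_le_trans[of _ a 1])
  define V where "V = Complex (1 - (a*b) * cos u) ((a*b) * sin u)"
  have Vc: "1 - of_real (a*b) * w = cnj V" unfolding V_def w_def by (simp add: complex_eq_iff)
  have VIm: "Im V \<noteq> 0" unfolding V_def using ab sp a b by simp
  have Vn: "V \<noteq> 0" using VIm by auto
  have sV: "sgn (cnj V) = cis (- dl (a*b) u)"
  proof -
    have "sgn (cnj V) = cis (Arg (cnj V))" using Vn by (simp add: cis_Arg)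
    moreover have "Arg (cnj V) = - Arg V" using VIm by (simp add: Arg_cnj complex_is_Real_iff)
    ultimately show ?thesis unfolding dl_def V_def by simp
  qed
  have "cis (thk a b u + thk b a u) = sgn z1 * sgn z2"
    unfolding thk_def z1_def[symmetric] z2_def[symmetric] cis_mult[symmetric] using z1n z2n
    by (simp add: cis_Arg)
  also have "\<dots> = sgn (z1 * z2)" by (simp add: sgn_mult)
  also have "\<dots> = sgn (of_real L) * sgn (- cnj w) * (sgn (cnj V))^2" unfolding prod Vc by (simp add: sgn_mult power2_eq_square)
  also have "\<dots> = cis (pi - u - 2 * dl (a*b) u)"
  proof -
    have "sgn (complex_of_real L) = 1" using Lpos by (simp add: sgn_of_real)
    moreover have "sgn (- cnj w) = cis (pi - u)" unfolding w_def by (simp add: cis_cnj sgn_minus cis_mult[symmetric] complex_eq_iff)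
    ultimately show ?thesis unfolding sV by (simp add: power2_eq_square cis_mult)
  qed
  finally have ce: "cis (thk a b u + thk b a u) = cis (pi - u - 2 * dl (a*b) u)" .
  have r1: "0 < thk a b u" "thk a b u < pi" using thk_range[OF a b(1) u] by auto
  have r2: "0 < thk b a u" "thk b a u < pi" using thk_range[OF b a(1) u] by auto
  have r3: "0 < dl (a*b) u" "2 * dl (a*b) u < pi - u" using dl_range[OF ab u] by auto
  show ?thesis by (rule cis_eq_range[OF ce]) (use r1 r2 r3 u in auto)
qed

lemma thk_sum_mono:
  assumes a: "0 < a'" "a' < a" "a < 1" and b: "0 < b'" "b' < b" "b < 1" and u: "0 < u" "u < pi"
  shows "thk a b u + thk b a u < thk a' b' u + thk b' a' u"
proof -
  have "a' * b' < a * b" using a b by (simp add: mult_strict_mono)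
  moreover have "0 < a' * b'" "a * b < 1" using a b by (simp_all add: mult_strict_mono' less_le_trans[of _ a 1])
  ultimately have "dl (a'*b') u < dl (a*b) u" using dl_mono u by blast
  then show ?thesis using thk_sum_eq[of a b u] thk_sum_eq[of a' b' u] a b u by simp
qed


definition dang :: "complex \<Rightarrow> complex \<Rightarrow> real" where
  "dang u v = Arg (- (v / u)) + pi"

definition kcfg :: "complex \<Rightarrow> real \<Rightarrow> complex \<Rightarrow> real \<Rightarrow> complex \<Rightarrow> complex \<Rightarrow> real \<Rightarrow> real \<Rightarrow> bool" where
  "kcfg cw rw cu ru po pn al sg \<longleftrightarrow> 0 < rw \<and> 0 < ru \<and>
     cmod (po - cw) = rw \<and> cmod (po - cu) = ru \<and> cmod (pn - cw) = rw \<and> cmod (pn - cu) = ru \<and>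
     po \<noteq> pn \<and> (cw - po) / (cu - po) = of_real (rw / ru) * cis (sg * al) \<and>
     (cu - pn) / (cw - pn) = of_real (ru / rw) * cis (sg * al)"

lemma Im_cis_sg:
  assumes "0 < R" "0 < al" "al < pi" "sg = 1 \<or> sg = -1"
  shows "Im (of_real R * cis (sg * al)) = R * sg * sin al"
  using assms by auto

lemma kite_lemma:
  assumes k: "kcfg cw rw cu ru po pn al sg" and al: "0 < al" "al < pi" and sg: "sg = 1 \<or> sg = -1"
  shows "\<bar>Arg ((pn - cw) / (cu - cw))\<bar> = \<bar>Arg ((po - cw) / (cu - cw))\<bar>"
    and "dang (pn - cw) (po - cw) = (if sg = 1 then 2*pi - 2*\<bar>Arg ((po - cw) / (cu - cw))\<bar> else 2*\<bar>Arg ((po - cw) / (cu - cw))\<bar>)"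
    and "0 < \<bar>Arg ((po - cw) / (cu - cw))\<bar>" "\<bar>Arg ((po - cw) / (cu - cw))\<bar> < pi"
proof -
  have rw: "0 < rw" and ru: "0 < ru" and d1: "cmod (po - cw) = rw" and d2: "cmod (po - cu) = ru"
    and d3: "cmod (pn - cw) = rw" and d4: "cmod (pn - cu) = ru" and ne: "po \<noteq> pn"
    and rX: "(cw - po) / (cu - po) = of_real (rw / ru) * cis (sg * al)"
    and rY: "(cu - pn) / (cw - pn) = of_real (ru / rw) * cis (sg * al)"
    using k unfolding kcfg_def by auto
  have sp: "0 < sin al" using al by (simp add: sin_gt_zero)
  define X where "X = of_real (rw / ru) * cis (sg * al)"
  define Y where "Y = of_real (ru / rw) * cis (sg * al)"
  have ImX: "Im X = (rw/ru) * sg * sin al" unfolding X_def using sg by auto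
  have ImY: "Im Y = (ru/rw) * sg * sin al" unfolding Y_def using sg by auto
  have X1: "X \<noteq> 1" using ImX rw ru sp sg by auto
  have Y1: "Y \<noteq> 1" using ImY rw ru sp sg by auto
  have cupo: "cu - po \<noteq> 0" using d2 ru by (metis norm_minus_commute norm_zero less_irrefl)
  have cwpn: "cw - pn \<noteq> 0" using d3 rw by (metis norm_minus_commute norm_zero less_irrefl)
  have eX: "cw - po = X * (cu - po)" using rX cupo unfolding X_def[symmetric] by (simp add: field_simps)
  have eY: "cu - pn = Y * (cw - pn)" using rY cwpn unfolding Y_def[symmetric] by (simp add: field_simps)
  have cucw: "cu - cw \<noteq> 0"
  proof
    assume "cu - cw = 0"
    then have "cw - po = cu - po" by simp
    then have "X = 1" using eX cupo by (metis mult_cancel_right1)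
    then show False using X1 by simp
  qed
  define ro where "ro = (po - cw) / (cu - cw)"
  define ri where "ri = (pn - cw) / (cu - cw)"
  have roX: "ro = - X / (1 - X)"
  proof -
    have "po - cw = - X * (cu - po)" using eX by (simp add: algebra_simps)
    moreover have "cu - cw = (1 - X) * (cu - po)" using eX by (simp add: algebra_simps)
    ultimately show ?thesis unfolding ro_def using cupo by simp
  qed
  have riY: "ri = 1 / (1 - Y)"
  proof -
    have "pn - cw = - (cw - pn)" by simp
    moreover have "cu - cw = - (1 - Y) * (cw - pn)" using eY by (simp add: algebra_simps)
    moreover have "Y - 1 \<noteq> 0" "1 - Y \<noteq> 0" using Y1 by auto
    ultimately show ?thesis unfolding ri_def using cwpn cucw by (simp add: field_simps)
  qed
  have Imro: "Im ro = - Im X / ((1 - Re X)^2 + (Im X)^2)"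
    unfolding roX by (simp add: Im_divide power2_eq_square algebra_simps)
  have Imri: "Im ri = Im Y / ((1 - Re Y)^2 + (Im Y)^2)"
    unfolding riY by (simp add: Im_divide power2_eq_square algebra_simps)
  have pX: "0 < (1 - Re X)^2 + (Im X)^2" using X1 by (smt (verit) complex_eq_iff one_complex.simps power2_less_0 sum_power2_gt_zero_iff zero_complex.simps)
  have pY: "0 < (1 - Re Y)^2 + (Im Y)^2" using Y1 by (smt (verit) complex_eq_iff one_complex.simps power2_less_0 sum_power2_gt_zero_iff zero_complex.simps)
  have ImXs: "sg = 1 \<Longrightarrow> Im X > 0" "sg = -1 \<Longrightarrow> Im X < 0" unfolding ImX using rw ru sp by auto
  have ImYs: "sg = 1 \<Longrightarrow> Im Y > 0" "sg = -1 \<Longrightarrow> Im Y < 0" unfolding ImY using rw ru sp by auto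
  have sgn1: "sg = 1 \<Longrightarrow> Im ro < 0 \<and> Im ri > 0"
    unfolding Imro Imri using ImXs ImYs pX pY by (smt (verit) divide_pos_pos minus_divide_left)
  have sgn2: "sg = -1 \<Longrightarrow> Im ro > 0 \<and> Im ri < 0"
    unfolding Imro Imri using ImXs ImYs pX pY by (smt (verit) divide_pos_pos minus_divide_left)
  define dd where "dd = cmod (cu - cw)"
  have dd: "0 < dd" unfolding dd_def using cucw by simp
  have n1: "cmod ro = rw / dd" "cmod ri = rw / dd" unfolding ro_def ri_def dd_def using d1 d3 by (simp_all add: norm_divide)
  have "ro - 1 = (po - cu) / (cu - cw)" unfolding ro_def using cucw by (simp add: field_simps)
  then have n2: "cmod (ro - 1) = ru / dd" unfolding dd_def using d2 by (simp add: norm_divide)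
  have "ri - 1 = (pn - cu) / (cu - cw)" unfolding ri_def using cucw by (simp add: field_simps)
  then have n3: "cmod (ri - 1) = ru / dd" unfolding dd_def using d4 by (simp add: norm_divide)
  have reid: "\<And>z. (cmod z)^2 - (cmod (z - 1))^2 = 2 * Re z - 1"
    unfolding cmod_power2 by (simp add: power2_eq_square algebra_simps)
  have Reeq: "Re ro = Re ri" using reid[of ro] reid[of ri] n1 n2 n3 by simp
  have "(Im ro)^2 = (Im ri)^2" using n1 Reeq by (metis cmod_power2 add_left_cancel)
  then have "Im ri = - Im ro" using sgn1 sgn2 sg by (smt (verit) power2_eq_iff)
  then have rc: "ri = cnj ro" using Reeq by (simp add: complex_eq_iff)
  have roR: "ro \<notin> \<real>" using sgn1 sgn2 sg by (auto simp: complex_is_Real_iff)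
  show "\<bar>Arg ((pn - cw) / (cu - cw))\<bar> = \<bar>Arg ((po - cw) / (cu - cw))\<bar>"
    unfolding ri_def[symmetric] ro_def[symmetric] rc using roR by (simp add: Arg_cnj)
  define th where "th = Arg ro"
  have thb: "- pi < th" "th \<le> pi" unfolding th_def using Arg_bounded by auto
  have ron: "ro \<noteq> 0" using roR by auto
  have th0: "th \<noteq> 0" "th \<noteq> pi" unfolding th_def using roR by (auto simp: Arg_eq_0 Arg_eq_pi complex_is_Real_iff)
  show "0 < \<bar>Arg ((po - cw) / (cu - cw))\<bar>" "\<bar>Arg ((po - cw) / (cu - cw))\<bar> < pi"
    unfolding ro_def[symmetric] th_def[symmetric] using thb th0 by auto
  have q: "(po - cw) / (pn - cw) = cis (2 * th)"
  proof -
    have "(po - cw) / (pn - cw) = ro / ri" unfolding ro_def ri_def using cucw by simp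
    also have "\<dots> = ro / cnj ro" unfolding rc ..
    also have "\<dots> = cis (2 * th)"
    proof -
      have "ro = of_real (cmod ro) * cis th" unfolding th_def using rcis_cmod_Arg[of ro] by (simp add: rcis_def)
      moreover have "cmod ro \<noteq> 0" using ron by simp
      ultimately have "ro / cnj ro = (of_real (cmod ro) * cis th) / (of_real (cmod ro) * cis (- th))"
        by (metis cis_cnj complex_cnj_complex_of_real complex_cnj_mult)
      also have "\<dots> = cis th / cis (-th)" using \<open>cmod ro \<noteq> 0\<close> by simp
      also have "\<dots> = cis (2 * th)"
      proof -
        have "th - - th = 2 * th" by simp
        then show ?thesis unfolding cis_divide by simp
      qed
      finally show ?thesis .
    qed
    finally show ?thesis .
  qed
  have ab: "\<bar>Arg ((po - cw) / (cu - cw))\<bar> = \<bar>th\<bar>" unfolding th_def ro_def ..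
  show "dang (pn - cw) (po - cw) = (if sg = 1 then 2*pi - 2*\<bar>Arg ((po - cw) / (cu - cw))\<bar> else 2*\<bar>Arg ((po - cw) / (cu - cw))\<bar>)"
  proof (cases "sg = 1")
    case True
    then have "Im ro < 0" using sgn1 by auto
    then have tn: "th < 0" unfolding th_def by (simp add: Arg_neg_iff)
    have "- ((po - cw) / (pn - cw)) = cis (2 * th + pi)" unfolding q by (simp add: cis_mult[symmetric])
    moreover have "Arg (cis (2 * th + pi)) = 2 * th + pi" using tn thb by (intro Arg_cis) auto
    ultimately show ?thesis unfolding dang_def ab using True tn by simp
  next
    case False
    then have "sg = -1" using sg by auto
    then have "Im ro > 0" using sgn2 by auto
    then have tp: "0 < th" "th < pi" unfolding th_def using Arg_lt_pi by auto
    have "- ((po - cw) / (pn - cw)) = cis (2 * th - pi)" unfolding q by (simp add: cis_divide[symmetric])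
    moreover have "Arg (cis (2 * th - pi)) = 2 * th - pi" using tp by (intro Arg_cis) auto
    ultimately show ?thesis unfolding dang_def ab using False tp by simp
  qed
qed


lemma ratio_aux:
  fixes A B x y l C :: complex and Rw Ru rw ru :: real
  assumes "A / of_real Rw = (x / of_real rw) * l" "B / of_real Ru = (y / of_real ru) * l"
    "l \<noteq> 0" "y \<noteq> 0" "Rw \<noteq> 0" "Ru \<noteq> 0" "rw \<noteq> 0" "ru \<noteq> 0"
    "x / y = of_real (rw / ru) * C"
  shows "A / B = of_real (Rw / Ru) * C"
proof -
  have A: "A = of_real Rw * (x / of_real rw) * l" using assms(1,5) by (simp add: field_simps)
  have B: "B = of_real Ru * (y / of_real ru) * l" using assms(2,6) by (simp add: field_simps)
  have x: "x = of_real (rw / ru) * C * y" using assms(9,4) by (simp add: field_simps)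
  show ?thesis unfolding A B x using assms(3-8) by (simp add: field_simps)
qed

lemma mob_kcfg:
  assumes a: "cmod a < 1" and cw: "cmod cw + rw < 1" and cu: "cmod cu + ru < 1"
    and k: "kcfg cw rw cu ru po pn al sg"
  shows "kcfg (mE a cw rw) (mR a cw rw) (mE a cu ru) (mR a cu ru) (mob a po) (mob a pn) al sg"
proof -
  have rw: "0 < rw" and ru: "0 < ru" and d1: "cmod (po - cw) = rw" and d2: "cmod (po - cu) = ru"
    and d3: "cmod (pn - cw) = rw" and d4: "cmod (pn - cu) = ru" and ne: "po \<noteq> pn"
    and rX: "(cw - po) / (cu - po) = of_real (rw / ru) * cis (sg * al)"
    and rY: "(cu - pn) / (cw - pn) = of_real (ru / rw) * cis (sg * al)"
    using k unfolding kcfg_def by auto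
  have pod: "cmod po < 1" by (rule circ_in_disc[OF cw d1])
  have pnd: "cmod pn < 1" by (rule circ_in_disc[OF cw d3])
  have Rw: "0 < mR a cw rw" by (rule mR_pos[OF a cw rw])
  have Ru: "0 < mR a cu ru" by (rule mR_pos[OF a cu ru])
  have Aw: "mA a cw rw \<noteq> 0" using mA_pos[OF a cw] rw by simp
  have Au: "mA a cu ru \<noteq> 0" using mA_pos[OF a cu] ru by simp
  have do: "1 - cnj a * po \<noteq> 0" by (rule disc_ne[OF a pod])
  have dn: "1 - cnj a * pn \<noteq> 0" by (rule disc_ne[OF a pnd])
  have lo: "(1 - a * cnj po) / (1 - cnj a * po) \<noteq> 0" using do cnj_ne[OF do] by simp
  have ln: "(1 - a * cnj pn) / (1 - cnj a * pn) \<noteq> 0" using dn cnj_ne[OF dn] by simp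
  have cupo: "cu - po \<noteq> 0" using d2 ru by (metis norm_minus_commute norm_zero less_irrefl)
  have cwpn: "cw - pn \<noteq> 0" using d3 rw by (metis norm_minus_commute norm_zero less_irrefl)
  have e1: "cmod (mob a po - mE a cw rw) = mR a cw rw" using circ_map[OF a cw _ pod] rw d1 by simp
  have e2: "cmod (mob a po - mE a cu ru) = mR a cu ru" using circ_map[OF a cu _ pod] ru d2 by simp
  have e3: "cmod (mob a pn - mE a cw rw) = mR a cw rw" using circ_map[OF a cw _ pnd] rw d3 by simp
  have e4: "cmod (mob a pn - mE a cu ru) = mR a cu ru" using circ_map[OF a cu _ pnd] ru d4 by simp
  have ne': "mob a po \<noteq> mob a pn"
  proof
    assume "mob a po = mob a pn"
    then have "mob (-a) (mob a po) = mob (-a) (mob a pn)" by simp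
    then show False using mob_inv[OF a do] mob_inv[OF a dn] ne by simp
  qed
  have r1: "(mE a cw rw - mob a po) / (mE a cu ru - mob a po) = of_real (mR a cw rw / mR a cu ru) * cis (sg * al)"
    by (rule ratio_aux[OF normal_eq[OF a Aw do _ d1] normal_eq[OF a Au do _ d2] lo cupo _ _ _ _ rX])
       (use rw ru Rw Ru in auto)
  have r2: "(mE a cu ru - mob a pn) / (mE a cw rw - mob a pn) = of_real (mR a cu ru / mR a cw rw) * cis (sg * al)"
    by (rule ratio_aux[OF normal_eq[OF a Au dn _ d4] normal_eq[OF a Aw dn _ d3] ln cwpn _ _ _ _ rY])
       (use rw ru Rw Ru in auto)
  show ?thesis unfolding kcfg_def using Rw Ru e1 e2 e3 e4 ne' r1 r2 by simp
qed

lemma frame_lemma: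
  assumes tw: "0 < tw" "tw < 1" and tu: "0 < tu" "tu < 1" and al: "0 < al" "al < pi"
    and sg: "sg = 1 \<or> sg = -1" and rho: "0 < \<rho>" and q: "cmod q = tw" and qe: "cmod (q - e) = \<rho>"
    and rat: "(0 - q) / (e - q) = of_real (tw / \<rho>) * cis (sg * al)"
    and kp: "kap e \<rho> = tu / (1 + tu^2)"
  shows "\<bar>Arg (q / e)\<bar> = thk tw tu al"
proof -
  define c where "c = cos al"
  define s where "s = sin al"
  have sp: "0 < s" unfolding s_def using al by (simp add: sin_gt_zero)
  have cs: "c^2 + s^2 = 1" unfolding c_def s_def by simp
  have c1: "c < 1" unfolding c_def using al by (smt (verit) cos_monotone_0_pi cos_zero)
  have eqn: "e - q \<noteq> 0" using qe rho by (metis norm_minus_commute norm_zero less_irrefl)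
  have qn: "q \<noteq> 0" using q tw by auto
  define X where "X = 1 - (\<rho>/tw) * c"
  define Y where "Y = (\<rho>/tw) * s"
  have Yp: "0 < Y" unfolding Y_def using rho tw sp by simp
  define W where "W = 1 - of_real (\<rho>/tw) * cis (- (sg * al))"
  have eW: "e = q * W"
  proof -
    have m: "- q = of_real (tw/\<rho>) * cis (sg*al) * (e - q)" using rat eqn by (simp add: field_simps)
    have c1: "cis (-(sg*al)) * cis (sg*al) = 1" by (simp add: cis_mult)
    have r1: "complex_of_real (\<rho>/tw) * complex_of_real (tw/\<rho>) = 1" using tw rho by (simp flip: of_real_mult)
    have "of_real (\<rho>/tw) * cis (-(sg*al)) * (- q) = (of_real (\<rho>/tw) * of_real (tw/\<rho>)) * (cis (-(sg*al)) * cis (sg*al)) * (e - q)"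
      unfolding m by (simp add: mult_ac)
    also have "\<dots> = e - q" by (simp only: c1 r1) simp
    finally show ?thesis unfolding W_def by (simp add: algebra_simps)
  qed
  have WC: "W = Complex X (sg * Y)"
    using sg unfolding W_def X_def Y_def c_def s_def by (auto simp: complex_eq_iff)
  have Wn: "W \<noteq> 0" using WC Yp sg by (auto simp: complex_eq_iff)
  have WR: "W \<notin> \<real>" using WC Yp sg by (auto simp: complex_is_Real_iff)
  have qe': "q / e = inverse W" unfolding eW using qn Wn by (simp add: field_simps)
  have A1: "\<bar>Arg (q / e)\<bar> = \<bar>Arg W\<bar>" unfolding qe' using WR by (simp add: Arg_inverse)
  have A2: "\<bar>Arg W\<bar> = Arg (Complex X Y)"
  proof -
    have pos: "0 < Arg (Complex X Y)" using Yp Arg_lt_pi[of "Complex X Y"] by simp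
    show ?thesis
    proof (cases "sg = 1")
      case True
      then have "W = Complex X Y" unfolding WC by simp
      then show ?thesis using pos by simp
    next
      case False
      then have "W = cnj (Complex X Y)" unfolding WC using sg by (simp add: complex_eq_iff)
      moreover have "Complex X Y \<notin> \<real>" using Yp by (simp add: complex_is_Real_iff)
      ultimately show ?thesis using pos by (simp add: Arg_cnj)
    qed
  qed
  have nW: "(cmod W)^2 = X^2 + Y^2" unfolding WC cmod_power2 using sg by (auto simp: power2_eq_square)
  have XY: "X^2 + Y^2 = 1 - 2 * (\<rho>/tw) * c + (\<rho>/tw)^2"
  proof -
    have "X^2 + Y^2 = 1 - 2 * (\<rho>/tw) * c + (\<rho>/tw)^2 * (c^2 + s^2)"
      unfolding X_def Y_def by (simp add: power2_eq_square algebra_simps add_divide_distrib)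
    then show ?thesis unfolding cs by simp
  qed
  have ne2: "(cmod e)^2 = tw^2 - 2 * tw * \<rho> * c + \<rho>^2"
  proof -
    have "(cmod e)^2 = tw^2 * (cmod W)^2" unfolding eW by (simp add: norm_mult power_mult_distrib q)
    also have "\<dots> = tw^2 * (1 - 2 * (\<rho>/tw) * c + (\<rho>/tw)^2)" unfolding nW XY ..
    also have "\<dots> = tw^2 - 2 * tw * \<rho> * c + \<rho>^2" using tw by (simp add: field_simps power2_eq_square)
    finally show ?thesis .
  qed
  define Q where "Q = 1 - tw^2 + 2 * tw * \<rho> * c"
  have kQ: "\<rho> / Q = tu / (1 + tu^2)" using kp unfolding kap_def ne2 Q_def by (simp add: algebra_simps)
  have tpos: "0 < tu / (1 + tu^2)" using tu by (simp add: add_pos_nonneg)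
  have Qn: "Q \<noteq> 0" using kQ tpos by auto
  define M where "M = 1 + tu^2 - 2 * tu * tw * c"
  have Mpos: "0 < M"
  proof -
    have "tw * c < 1"
    proof (cases "c \<le> 0")
      case True then show ?thesis using tw by (smt (verit) mult_nonneg_nonpos)
    next
      case False then have "tw * c < 1 * 1" using tw c1 by (intro mult_strict_mono) auto
      then show ?thesis by simp
    qed
    then have "2 * tu * (tw * c) < 2 * tu" using tu by simp
    moreover have "(1 - tu)^2 \<ge> 0" by simp
    ultimately show ?thesis unfolding M_def by (simp add: power2_eq_square algebra_simps)
  qed
  have rhoe: "\<rho> = tu * (1 - tw^2) / M"
  proof -
    have t2: "1 + tu^2 \<noteq> 0" using add_pos_nonneg[of 1 "tu^2"] by simp
    have "\<rho> * (1 + tu^2) = tu * Q" using kQ Qn t2 by (simp add: divide_eq_eq eq_divide_eq mult.commute)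
    then have "\<rho> * M = tu * (1 - tw^2)" unfolding M_def Q_def by (simp add: algebra_simps)
    then show ?thesis using Mpos by (simp add: field_simps)
  qed
  define ka where "ka = 1 / (tw * M)"
  have kap0: "0 < ka" unfolding ka_def using tw Mpos by simp
  have Mn: "M \<noteq> 0" using Mpos by simp
  have NM: "tw*(1+tu^2) - tu*cos al*(1+tw^2) = tw*M - tu*c*(1-tw^2)"
    unfolding M_def c_def by (simp add: algebra_simps power2_eq_square)
  have ReX: "X = ka * (tw*(1+tu^2) - tu*cos al*(1+tw^2))"
    unfolding NM X_def ka_def rhoe using Mn tw by (simp add: field_simps)
  have ImY: "Y = ka * (tu * sin al*(1-tw^2))"
    unfolding Y_def ka_def rhoe s_def using Mn tw by (simp add: field_simps)
  have CXY: "Complex X Y = of_real ka * Complex (tw*(1+tu^2) - tu*cos al*(1+tw^2)) (tu * sin al*(1-tw^2))"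
    using ReX ImY by (simp add: complex_eq_iff)
  show ?thesis unfolding A1 A2 CXY thk_def using kap0 by simp
qed


lemma mob0: "mob 0 z = z" unfolding mob_def by simp
lemma mE0: "mE 0 c r = c" unfolding mE_def mA_def by simp

lemma cis_sum: "cis (sum f A) = (\<Prod>x\<in>A. cis (f x))"
  by (induction A rule: infinite_finite_induct) (auto simp: cis_mult[symmetric])

lemma cis_dang:
  assumes u: "u \<noteq> 0" and n: "cmod v = cmod u"
  shows "cis (dang u v) = v / u"
proof -
  have v: "v \<noteq> 0" using u n by auto
  have nv: "cmod (v / u) = 1" using u n by (simp add: norm_divide)
  have "cis (dang u v) = cis (Arg (- (v / u))) * cis pi" unfolding dang_def by (rule cis_mult[symmetric])
  also have "\<dots> = - sgn (- (v / u))" using u v by (simp add: cis_Arg)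
  also have "\<dots> = v / u" using nv by (simp add: sgn_div_norm)
  finally show ?thesis .
qed

lemma cis1_int: "cis x = 1 \<Longrightarrow> x / (2*pi) \<in> \<int>"
proof -
  assume "cis x = 1"
  then have "exp (\<i> * of_real x) = 1" by (simp add: cis_conv_exp)
  then obtain n :: int where "x = of_int (2 * n) * pi" unfolding exp_eq_1 by auto
  then have "x / (2*pi) = of_int n" by simp
  then show ?thesis by simp
qed

lemma sA_bound: "cmod a0 < 1 \<Longrightarrow> s \<in> {0..1} \<Longrightarrow> cmod (of_real s * a0) < 1"
proof -
  assume a0: "cmod a0 < 1" and s: "s \<in> {0..1::real}"
  have "cmod (of_real s * a0) = s * cmod a0" using s by (simp add: norm_mult)
  also have "\<dots> \<le> cmod a0" using s by (simp add: mult_left_le_one_le)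
  finally show ?thesis using a0 by simp
qed

lemma cont_mob:
  assumes a0: "cmod a0 < 1" and z: "cmod z < 1"
  shows "continuous_on {0..1} (\<lambda>s::real. mob (of_real s * a0) z)"
proof -
  have "\<forall>s\<in>{0..1}. 1 - cnj (of_real s * a0) * z \<noteq> 0" using disc_ne sA_bound a0 z by blast
  then show ?thesis unfolding mob_def by (intro continuous_intros) auto
qed

lemma cont_mE:
  assumes a0: "cmod a0 < 1" and cr: "cmod c + r < 1" and r: "0 \<le> r"
  shows "continuous_on {0..1} (\<lambda>s::real. mE (of_real s * a0) c r)"
proof -
  have "\<forall>s\<in>{0..1}. complex_of_real (mA (of_real s * a0) c r) \<noteq> 0"
    using mA_pos[OF _ cr r] sA_bound[OF a0] by (metis less_irrefl of_real_eq_0_iff)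
  then show ?thesis unfolding mE_def mA_def by (intro continuous_intros) auto
qed

lemma winding:
  fixes Fw :: "'f set" and out inn opp :: "'f \<Rightarrow> 'v" and c p :: "'v \<Rightarrow> complex"
    and r :: "'v \<Rightarrow> real" and al :: "'f \<Rightarrow> real"
  assumes fin: "finite Fw" and io: "inj_on out Fw" "inj_on inn Fw" "out ` Fw = inn ` Fw"
    and cw: "cmod (c w) + r w < 1" "0 < r w"
    and cu: "\<forall>f\<in>Fw. cmod (c (opp f)) + r (opp f) < 1"
    and als: "\<forall>f\<in>Fw. 0 < al f \<and> al f < pi"
    and kc: "\<forall>f\<in>Fw. kcfg (c w) (r w) (c (opp f)) (r (opp f)) (p (out f)) (p (inn f)) (al f) sg"
    and sg: "sg = 1 \<or> sg = -1"
    and ks: "(\<Sum>f\<in>Fw. 2 * \<bar>Arg ((p (out f) - c w) / (c (opp f) - c w))\<bar>) = 2 * pi"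
  shows "(\<Sum>f\<in>Fw. 2 * thk (tt (c w) (r w)) (tt (c (opp f)) (r (opp f))) (al f)) = 2 * pi"
proof -
  define a0 where "a0 = hc (c w) (r w)"
  have a0: "cmod a0 < 1" and E0: "mE a0 (c w) (r w) = 0" using hc_props[OF cw] unfolding a0_def by auto
  define A where "A s = complex_of_real s * a0" for s :: real
  have Ab: "\<And>s. s \<in> {0..1} \<Longrightarrow> cmod (A s) < 1" unfolding A_def using sA_bound[OF a0] by blast
  define E where "E s = mE (A s) (c w) (r w)" for s
  define X where "X s b = mob (A s) (p b) - E s" for s b
  define G where "G s = (\<Sum>f\<in>Fw. dang (X s (inn f)) (X s (out f)))" for s
  have pon: "\<And>f. f \<in> Fw \<Longrightarrow> cmod (p (out f) - c w) = r w \<and> cmod (p (inn f) - c w) = r w \<and> p (out f) \<noteq> p (inn f)"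
    using kc unfolding kcfg_def by auto
  have pd: "\<And>b. cmod (p b - c w) = r w \<Longrightarrow> cmod (p b) < 1" using circ_in_disc[OF cw(1)] by blast
  have Xn: "\<And>(s::real) b. s \<in> {0..1} \<Longrightarrow> cmod (p b - c w) = r w \<Longrightarrow> cmod (X s b) = mR (A s) (c w) (r w)"
  proof -
    fix s :: real and b assume s: "s \<in> {0..1}" and b: "cmod (p b - c w) = r w"
    show "cmod (X s b) = mR (A s) (c w) (r w)"
      unfolding X_def E_def using circ_map[OF Ab[OF s] cw(1) _ pd[OF b]] cw b by simp
  qed
  have Rp: "\<And>s::real. s \<in> {0..1} \<Longrightarrow> 0 < mR (A s) (c w) (r w)" using mR_pos[OF _ cw(1) cw(2)] Ab by blast
  have Xne: "\<And>(s::real) f. s \<in> {0..1} \<Longrightarrow> f \<in> Fw \<Longrightarrow> X s (out f) \<noteq> X s (inn f)"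
  proof
    fix s :: real and f assume s: "s \<in> {0..1}" and f: "f \<in> Fw" and eq: "X s (out f) = X s (inn f)"
    then have "mob (A s) (p (out f)) = mob (A s) (p (inn f))" unfolding X_def by simp
    then have "mob (- A s) (mob (A s) (p (out f))) = mob (- A s) (mob (A s) (p (inn f)))" by simp
    moreover have "1 - cnj (A s) * p (out f) \<noteq> 0" "1 - cnj (A s) * p (inn f) \<noteq> 0"
      using disc_ne Ab[OF s] pd pon[OF f] by auto
    ultimately have "p (out f) = p (inn f)" using mob_inv Ab[OF s] by metis
    then show False using pon[OF f] by simp
  qed
  have Xi0: "\<And>(s::real) f. s \<in> {0..1} \<Longrightarrow> f \<in> Fw \<Longrightarrow> X s (inn f) \<noteq> 0"
    using Xn Rp pon by (metis norm_zero less_irrefl)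
  have Xeq: "\<And>(s::real) f. s \<in> {0..1} \<Longrightarrow> f \<in> Fw \<Longrightarrow> cmod (X s (out f)) = cmod (X s (inn f))"
    using Xn pon by metis
  have nonpos: "\<And>(s::real) f. s \<in> {0..1} \<Longrightarrow> f \<in> Fw \<Longrightarrow> - (X s (out f) / X s (inn f)) \<notin> \<real>\<^sub>\<le>\<^sub>0"
  proof
    fix s :: real and f assume s: "s \<in> {0..1}" and f: "f \<in> Fw" and np: "- (X s (out f) / X s (inn f)) \<in> \<real>\<^sub>\<le>\<^sub>0"
    define z where "z = X s (out f) / X s (inn f)"
    have nz: "cmod z = 1" unfolding z_def using Xeq[OF s f] Xi0[OF s f] by (simp add: norm_divide)
    have "Im z = 0" "0 \<le> Re z" using np unfolding z_def[symmetric] by (auto simp: complex_nonpos_Reals_iff)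
    then have "z = 1" using nz by (simp add: complex_eq_iff cmod_def)
    then show False using Xne[OF s f] Xi0[OF s f] unfolding z_def by simp
  qed
  have contX: "\<And>b. cmod (p b - c w) = r w \<Longrightarrow> continuous_on {0..1} (\<lambda>s. X s b)"
    unfolding X_def E_def A_def using cont_mob[OF a0] cont_mE[OF a0 cw(1)] cw pd
    by (intro continuous_intros) auto
  have contG: "continuous_on {0..1} G"
    unfolding G_def dang_def
  proof (intro continuous_intros)
    fix f assume f: "f \<in> Fw"
    show "continuous_on {0..1} (\<lambda>s. X s (out f))" using contX pon[OF f] by blast
    show "continuous_on {0..1} (\<lambda>s. X s (inn f))" using contX pon[OF f] by blast
    show "\<forall>s\<in>{0..1}. X s (inn f) \<noteq> 0" using Xi0 f by blast
    fix s assume "s \<in> {0..1::real}"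
    then show "- (X s (out f) / X s (inn f)) \<notin> \<real>\<^sub>\<le>\<^sub>0" using nonpos f by blast
  qed
  have cisG: "\<And>s::real. s \<in> {0..1} \<Longrightarrow> cis (G s) = 1"
  proof -
    fix s assume s: "s \<in> {0..1::real}"
    have "cis (G s) = (\<Prod>f\<in>Fw. X s (out f) / X s (inn f))"
      unfolding G_def cis_sum using cis_dang Xi0[OF s] Xeq[OF s] by (intro prod.cong) auto
    also have "\<dots> = (\<Prod>f\<in>Fw. X s (out f)) / (\<Prod>f\<in>Fw. X s (inn f))" by (rule prod_dividef)
    also have "(\<Prod>f\<in>Fw. X s (out f)) = (\<Prod>f\<in>Fw. X s (inn f))"
    proof -
      have "(\<Prod>f\<in>Fw. X s (out f)) = prod (X s) (out ` Fw)" using prod.reindex[OF io(1), of "X s"] by simp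
      also have "\<dots> = prod (X s) (inn ` Fw)" unfolding io(3) ..
      also have "\<dots> = (\<Prod>f\<in>Fw. X s (inn f))" using prod.reindex[OF io(2), of "X s"] by simp
      finally show ?thesis .
    qed
    also have "(\<Prod>f\<in>Fw. X s (inn f)) \<noteq> 0" using fin Xi0[OF s] by simp
    ultimately show "cis (G s) = 1" by simp
  qed
  define h where "h s = G s / (2*pi)" for s
  have hint: "\<And>s::real. s \<in> {0..1} \<Longrightarrow> h s \<in> \<int>" unfolding h_def using cisG cis1_int by blast
  have "h constant_on {0..1}"
  proof (rule continuous_discrete_range_constant)
    show "connected {0..1::real}" by simp
    show "continuous_on {0..1} h" unfolding h_def using contG by (intro continuous_intros) auto
    fix x assume x: "x \<in> {0..1::real}"
    show "\<exists>e>0. \<forall>y. y \<in> {0..1} \<and> h y \<noteq> h x \<longrightarrow> e \<le> norm (h y - h x)"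
    proof (intro exI[of _ 1] conjI allI impI)
      fix y assume "y \<in> {0..1} \<and> h y \<noteq> h x"
      then have "h y - h x \<in> \<int>" "h y - h x \<noteq> 0" using hint x by auto
      then show "1 \<le> norm (h y - h x)" using Ints_nonzero_abs_ge1[of "h y - h x"] by simp
    qed simp
  qed
  then have "h 0 = h 1" unfolding constant_on_def by force
  then have G01: "G 0 = G 1" unfolding h_def by simp
  define S where "S x = (if sg = 1 then 2*pi - 2*x else 2*x)" for x :: real
  define phi where "phi f = \<bar>Arg ((p (out f) - c w) / (c (opp f) - c w))\<bar>" for f
  define th where "th f = thk (tt (c w) (r w)) (tt (c (opp f)) (r (opp f))) (al f)" for f
  have X0: "\<And>b. X 0 b = p b - c w" unfolding X_def E_def A_def by (simp add: mob0 mE0)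
  have G0: "G 0 = (\<Sum>f\<in>Fw. S (phi f))"
    unfolding G_def
  proof (rule sum.cong[OF refl])
    fix f assume f: "f \<in> Fw"
    have al: "0 < al f" "al f < pi" using als f by auto
    have k: "kcfg (c w) (r w) (c (opp f)) (r (opp f)) (p (out f)) (p (inn f)) (al f) sg" using kc f by auto
    show "dang (X 0 (inn f)) (X 0 (out f)) = S (phi f)"
      unfolding X0 S_def phi_def using kite_lemma(2)[OF k al sg] by simp
  qed
  have G1: "G 1 = (\<Sum>f\<in>Fw. S (th f))"
    unfolding G_def
  proof (rule sum.cong[OF refl])
    fix f assume f: "f \<in> Fw"
    have al: "0 < al f" "al f < pi" using als f by auto
    have ru: "0 < r (opp f)" using kc f unfolding kcfg_def by auto
    have cuf: "cmod (c (opp f)) + r (opp f) < 1" using cu f by auto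
    have k1: "kcfg 0 (tt (c w) (r w)) (mE a0 (c (opp f)) (r (opp f))) (mR a0 (c (opp f)) (r (opp f)))
                 (mob a0 (p (out f))) (mob a0 (p (inn f))) (al f) sg"
    proof -
      have k0: "kcfg (mE a0 (c w) (r w)) (mR a0 (c w) (r w)) (mE a0 (c (opp f)) (r (opp f))) (mR a0 (c (opp f)) (r (opp f)))
                 (mob a0 (p (out f))) (mob a0 (p (inn f))) (al f) sg"
        by (rule mob_kcfg[OF a0 cw(1) cuf]) (use kc f in auto)
      have ttw: "mR a0 (c w) (r w) = tt (c w) (r w)" unfolding tt_def a0_def ..
      show ?thesis using k0 unfolding E0 ttw .
    qed
    have X1: "\<And>b. X 1 b = mob a0 (p b)" unfolding X_def E_def A_def using E0 by simp
    have dd: "dang (X 1 (inn f)) (X 1 (out f)) = S \<bar>Arg ((mob a0 (p (out f)) - 0) / (mE a0 (c (opp f)) (r (opp f)) - 0))\<bar>"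
      unfolding X1 S_def using kite_lemma(2)[OF k1 al sg] by simp
    have tw: "0 < tt (c w) (r w)" "tt (c w) (r w) < 1" using tt_props[OF cw] by auto
    have tu: "0 < tt (c (opp f)) (r (opp f))" "tt (c (opp f)) (r (opp f)) < 1" using tt_props[OF cuf ru] by auto
    have kk: "kap (mE a0 (c (opp f)) (r (opp f))) (mR a0 (c (opp f)) (r (opp f))) = tt (c (opp f)) (r (opp f)) / (1 + (tt (c (opp f)) (r (opp f)))^2)"
    proof -
      have A: "mA a0 (c (opp f)) (r (opp f)) \<noteq> 0" using mA_pos[OF a0 cuf] ru by simp
      have k: "1 + (r (opp f))^2 - (cmod (c (opp f)))^2 \<noteq> 0"
      proof -
        have "cmod (c (opp f)) < 1" using cuf ru by simp
        then have "(cmod (c (opp f)))^2 < 1" by (simp add: abs_square_less_1)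
        then show ?thesis by (smt (verit) zero_le_power2)
      qed
      show ?thesis using kap_inv[OF A a0 k] tt_props(3)[OF cuf ru] by simp
    qed
    have k1': "0 < mR a0 (c (opp f)) (r (opp f))" "cmod (mob a0 (p (out f)) - 0) = tt (c w) (r w)"
       "cmod (mob a0 (p (out f)) - mE a0 (c (opp f)) (r (opp f))) = mR a0 (c (opp f)) (r (opp f))"
       "(0 - mob a0 (p (out f))) / (mE a0 (c (opp f)) (r (opp f)) - mob a0 (p (out f)))
          = of_real (tt (c w) (r w) / mR a0 (c (opp f)) (r (opp f))) * cis (sg * al f)"
      using k1 unfolding kcfg_def by auto
    have fl: "\<bar>Arg (mob a0 (p (out f)) / mE a0 (c (opp f)) (r (opp f)))\<bar> = th f"
      unfolding th_def by (rule frame_lemma[OF tw tu al sg k1'(1)]) (use k1' kk in auto)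
    show "dang (X 1 (inn f)) (X 1 (out f)) = S (th f)" unfolding dd using fl by simp
  qed
  have "(\<Sum>f\<in>Fw. S (phi f)) = (\<Sum>f\<in>Fw. S (th f))" using G01 G0 G1 by simp
  then have "(\<Sum>f\<in>Fw. 2 * phi f) = (\<Sum>f\<in>Fw. 2 * th f)"
    unfolding S_def by (cases "sg = 1") (simp_all add: sum_subtractf sum_distrib_left)
  then show ?thesis using ks unfolding phi_def th_def by simp
qed


definition opw :: "('f \<Rightarrow> 'v list) \<Rightarrow> 'f \<Rightarrow> 'v \<Rightarrow> 'v" where
  "opw K f w = (if K f ! 0 = w then K f ! 2 else K f ! 0)"
definition outw :: "('f \<Rightarrow> 'v list) \<Rightarrow> 'f \<Rightarrow> 'v \<Rightarrow> 'v" where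
  "outw K f w = (if K f ! 0 = w then K f ! 1 else K f ! 3)"
definition innw :: "('f \<Rightarrow> 'v list) \<Rightarrow> 'f \<Rightarrow> 'v \<Rightarrow> 'v" where
  "innw K f w = (if K f ! 0 = w then K f ! 3 else K f ! 1)"

lemma less4: "(i::nat) < 4 \<longleftrightarrow> i = 0 \<or> i = 1 \<or> i = 2 \<or> i = 3" by arith

lemma m4: "((0::nat)+1) mod 4 = 1" "((1::nat)+1) mod 4 = 2" "((2::nat)+1) mod 4 = 3" "((3::nat)+1) mod 4 = 0"
  by arith+

lemma dedges_cases: "(x,y) \<in> dedges K f \<Longrightarrow>
   (x,y) = (K f!0,K f!1) \<or> (x,y) = (K f!1,K f!2) \<or> (x,y) = (K f!2,K f!3) \<or> (x,y) = (K f!3,K f!0)"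
proof -
  assume "(x,y) \<in> dedges K f"
  then obtain i where e: "(x,y) = (K f!i, K f!((i+1) mod 4))" and i: "i < 4" unfolding dedges_def by blast
  from i have "i = 0 \<or> i = 1 \<or> i = 2 \<or> i = 3" by (simp only: less4)
  then show ?thesis
  proof (elim disjE)
    assume "i = 0" then show ?thesis using e unfolding m4 by (simp only: m4) blast
  next
    assume "i = 1" then show ?thesis using e by (simp only: m4) blast
  next
    assume "i = 2" then show ?thesis using e by (simp only: m4) blast
  next
    assume "i = 3" then show ?thesis using e by (simp only: m4) blast
  qed
qed

lemma dedges_mem: "(K f!0,K f!1) \<in> dedges K f" "(K f!1,K f!2) \<in> dedges K f"
    "(K f!2,K f!3) \<in> dedges K f" "(K f!3,K f!0) \<in> dedges K f"
proof -
  have "\<And>j. j < 4 \<Longrightarrow> (K f!j, K f!((j+1) mod 4)) \<in> dedges K f" unfolding dedges_def by blast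
  from this[of 0] this[of 1] this[of 2] this[of 3]
  show "(K f!0,K f!1) \<in> dedges K f" "(K f!1,K f!2) \<in> dedges K f"
    "(K f!2,K f!3) \<in> dedges K f" "(K f!3,K f!0) \<in> dedges K f"
    unfolding m4 by simp_all
qed

lemma bq_facts:
  assumes "b_quad_graph F K"
  shows "finite F" "\<And>f. f \<in> F \<Longrightarrow> length (K f) = 4 \<and> distinct (K f)"
    "white_verts F K \<inter> black_verts F K = {}"
    "\<And>f g e. f \<in> F \<Longrightarrow> g \<in> F \<Longrightarrow> e \<in> dedges K f \<Longrightarrow> e \<in> dedges K g \<Longrightarrow> f = g"
proof -
  have "finite F" "\<forall>f\<in>F. length (K f) = 4 \<and> distinct (K f)" "white_verts F K \<inter> black_verts F K = {}"
    "\<forall>f\<in>F. \<forall>g\<in>F. \<forall>e. e \<in> dedges K f \<and> e \<in> dedges K g \<longrightarrow> f = g"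
    using conjunct1[OF assms[unfolded b_quad_graph_def]]
      conjunct1[OF conjunct2[OF assms[unfolded b_quad_graph_def]]]
      conjunct1[OF conjunct2[OF conjunct2[OF assms[unfolded b_quad_graph_def]]]]
      conjunct1[OF conjunct2[OF conjunct2[OF conjunct2[OF assms[unfolded b_quad_graph_def]]]]]
    by blast+
  then show "finite F" "\<And>f. f \<in> F \<Longrightarrow> length (K f) = 4 \<and> distinct (K f)"
    "white_verts F K \<inter> black_verts F K = {}"
    "\<And>f g e. f \<in> F \<Longrightarrow> g \<in> F \<Longrightarrow> e \<in> dedges K f \<Longrightarrow> e \<in> dedges K g \<Longrightarrow> f = g"
    by blast+
qed

lemma dist4:
  assumes "length l = 4" "distinct l" "i < 4" "j < 4" "i \<noteq> j"
  shows "l ! i \<noteq> l ! j"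
  using assms by (simp add: nth_eq_iff_index_eq)

lemma wb_mem:
  assumes "f \<in> F"
  shows "K f ! 0 \<in> white_verts F K" "K f ! 2 \<in> white_verts F K"
    "K f ! 1 \<in> black_verts F K" "K f ! 3 \<in> black_verts F K"
  using assms unfolding white_verts_def black_verts_def by blast+

lemma circ_disc_bound:
  assumes r: "0 < r" and sub: "{z. cmod (z - c) = r} \<subseteq> {z. cmod z < 1}"
  shows "cmod c + r < 1"
proof -
  define u where "u = (if c = 0 then 1 else c / of_real (cmod c))"
  have u1: "cmod u = 1" unfolding u_def by (simp add: norm_divide)
  define z where "z = c + of_real r * u"
  have "cmod (z - c) = r" unfolding z_def using r u1 by (simp add: norm_mult)
  then have zd: "cmod z < 1" using sub by blast
  have zeq: "z = of_real (cmod c + r) * u"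
    unfolding z_def u_def by (cases "c = 0") (simp_all add: field_simps)
  have "cmod z = cmod (complex_of_real (cmod c + r)) * cmod u" by (simp only: zeq norm_mult)
  also have "\<dots> = cmod c + r" using u1 r by (simp del: of_real_add add: abs_of_nonneg)
  finally have "cmod z = cmod c + r" .
  then show ?thesis using zd by simp
qed

lemma cp_kcfg:
  assumes bq: "b_quad_graph F K" and cp: "circle_pattern F K al c r p"
  shows "\<exists>s. (s = 1 \<or> s = -1) \<and> (\<forall>f\<in>F.
     kcfg (c (K f!0)) (r (K f!0)) (c (K f!2)) (r (K f!2)) (p (K f!1)) (p (K f!3)) (al f) s \<and>
     kcfg (c (K f!2)) (r (K f!2)) (c (K f!0)) (r (K f!0)) (p (K f!3)) (p (K f!1)) (al f) s)"
proof -
  have rp: "\<forall>w\<in>white_verts F K. 0 < r w" using conjunct1[OF cp[unfolded circle_pattern_def]] .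
  note ex = conjunct1[OF conjunct2[OF cp[unfolded circle_pattern_def]]]
  from ex obtain s where s: "s \<in> {1, -1::real}" and sf: "\<forall>f\<in>F.
        (let w1 = K f ! 0; b1 = K f ! 1; w2 = K f ! 2; b2 = K f ! 3 in
           cmod (p b1 - c w1) = r w1 \<and> cmod (p b1 - c w2) = r w2 \<and>
           cmod (p b2 - c w1) = r w1 \<and> cmod (p b2 - c w2) = r w2 \<and>
           p b1 \<noteq> p b2 \<and>
           (c w1 - p b1) / (c w2 - p b1) = complex_of_real (r w1 / r w2) * cis (s * al f) \<and>
           (c w2 - p b2) / (c w1 - p b2) = complex_of_real (r w2 / r w1) * cis (s * al f))"
    ..
  show ?thesis
  proof (intro exI conjI ballI)
    show "s = 1 \<or> s = -1" using s by auto
    fix f assume f: "f \<in> F"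
    have r0: "0 < r (K f!0)" "0 < r (K f!2)" using rp wb_mem[OF f] by auto
    have h0: "cmod (p (K f!1) - c (K f!0)) = r (K f!0) \<and> cmod (p (K f!1) - c (K f!2)) = r (K f!2) \<and> cmod (p (K f!3) - c (K f!0)) = r (K f!0) \<and> cmod (p (K f!3) - c (K f!2)) = r (K f!2) \<and> p (K f!1) \<noteq> p (K f!3) \<and> (c (K f!0) - p (K f!1)) / (c (K f!2) - p (K f!1)) = complex_of_real (r (K f!0) / r (K f!2)) * cis (s * al f) \<and> (c (K f!2) - p (K f!3)) / (c (K f!0) - p (K f!3)) = complex_of_real (r (K f!2) / r (K f!0)) * cis (s * al f)"
      using bspec[OF sf f] unfolding Let_def by assumption
    note h = conjunct1[OF h0] conjunct1[OF conjunct2[OF h0]]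
      conjunct1[OF conjunct2[OF conjunct2[OF h0]]]
      conjunct1[OF conjunct2[OF conjunct2[OF conjunct2[OF h0]]]]
      conjunct1[OF conjunct2[OF conjunct2[OF conjunct2[OF conjunct2[OF h0]]]]]
      conjunct1[OF conjunct2[OF conjunct2[OF conjunct2[OF conjunct2[OF conjunct2[OF h0]]]]]]
      conjunct2[OF conjunct2[OF conjunct2[OF conjunct2[OF conjunct2[OF conjunct2[OF h0]]]]]]
    show "kcfg (c (K f!0)) (r (K f!0)) (c (K f!2)) (r (K f!2)) (p (K f!1)) (p (K f!3)) (al f) s"
      unfolding kcfg_def by (intro conjI r0 h)
    show "kcfg (c (K f!2)) (r (K f!2)) (c (K f!0)) (r (K f!0)) (p (K f!3)) (p (K f!1)) (al f) s"
      unfolding kcfg_def by (intro conjI r0 h not_sym[OF h(5)])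
  qed
qed

lemma hyp_angle_sum:
  assumes bq: "b_quad_graph F K" and adm: "admissible F K al" and cp: "circle_pattern F K al c r p"
    and D: "\<forall>w\<in>white_verts F K. {z. cmod (z - c w) = r w} \<subseteq> {z. cmod z < 1}"
    and w: "w \<in> white_verts F K" "w \<in> interior_verts F K"
  shows "(\<Sum>f\<in>{f\<in>F. K f!0 = w \<or> K f!2 = w}. 2 * thk (tt (c w) (r w)) (tt (c (opw K f w)) (r (opw K f w))) (al f)) = 2 * pi"
proof -
  define Fw where "Fw = {f\<in>F. K f!0 = w \<or> K f!2 = w}"
  have finF: "finite F" and lenK: "\<And>f. f \<in> F \<Longrightarrow> length (K f) = 4 \<and> distinct (K f)"
    and wbd: "white_verts F K \<inter> black_verts F K = {}"
    and coh: "\<And>f g e. f \<in> F \<Longrightarrow> g \<in> F \<Longrightarrow> e \<in> dedges K f \<Longrightarrow> e \<in> dedges K g \<Longrightarrow> f = g"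
    using bq_facts[OF bq] by blast+
  have neq: "\<And>f i j. f \<in> F \<Longrightarrow> i < 4 \<Longrightarrow> j < 4 \<Longrightarrow> i \<noteq> j \<Longrightarrow> K f ! i \<noteq> K f ! j"
    using lenK dist4 by blast
  have rp: "\<forall>v\<in>white_verts F K. 0 < r v" using conjunct1[OF cp[unfolded circle_pattern_def]] .
  have cb: "\<And>v. v \<in> white_verts F K \<Longrightarrow> cmod (c v) + r v < 1" using circ_disc_bound rp D by blast
  obtain s where s: "s = 1 \<or> s = -1" and kf: "\<forall>f\<in>F.
     kcfg (c (K f!0)) (r (K f!0)) (c (K f!2)) (r (K f!2)) (p (K f!1)) (p (K f!3)) (al f) s \<and>
     kcfg (c (K f!2)) (r (K f!2)) (c (K f!0)) (r (K f!0)) (p (K f!3)) (p (K f!1)) (al f) s"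
    using cp_kcfg[OF bq cp] by blast
  have outm: "\<And>f. f \<in> Fw \<Longrightarrow> (w, outw K f w) \<in> dedges K f"
  proof -
    fix f assume f: "f \<in> Fw"
    show "(w, outw K f w) \<in> dedges K f"
    proof (cases "K f!0 = w")
      case True then show ?thesis unfolding outw_def using dedges_mem(1)[of K f] by simp
    next
      case False then have "K f!2 = w" using f unfolding Fw_def by auto
      then show ?thesis unfolding outw_def using False dedges_mem(3)[of K f] by simp
    qed
  qed
  have innm: "\<And>f. f \<in> Fw \<Longrightarrow> (innw K f w, w) \<in> dedges K f"
  proof -
    fix f assume f: "f \<in> Fw"
    show "(innw K f w, w) \<in> dedges K f"
    proof (cases "K f!0 = w")
      case True then show ?thesis unfolding innw_def using dedges_mem(4)[of K f] by simp
    next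
      case False then have "K f!2 = w" using f unfolding Fw_def by auto
      then show ?thesis unfolding innw_def using False dedges_mem(2)[of K f] by simp
    qed
  qed
  have FwF: "Fw \<subseteq> F" unfolding Fw_def by auto
  have inj1: "inj_on (\<lambda>f. outw K f w) Fw"
  proof (rule inj_onI)
    fix f g assume f: "f \<in> Fw" and g: "g \<in> Fw" and e: "outw K f w = outw K g w"
    have "(w, outw K f w) \<in> dedges K g" using outm[OF g] e by simp
    then show "f = g" using coh[OF _ _ outm[OF f]] FwF f g by blast
  qed
  have inj2: "inj_on (\<lambda>f. innw K f w) Fw"
  proof (rule inj_onI)
    fix f g assume f: "f \<in> Fw" and g: "g \<in> Fw" and e: "innw K f w = innw K g w"
    have "(innw K f w, w) \<in> dedges K g" using innm[OF g] e by simp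
    then show "f = g" using coh[OF _ _ innm[OF f]] FwF f g by blast
  qed
  have notbd: "\<And>x. \<not> boundary_edge F K (w, x) \<and> \<not> boundary_edge F K (x, w)"
    using w(2) unfolding interior_verts_def boundary_verts_def by blast
  have wnb: "w \<notin> black_verts F K" using w(1) wbd by blast
  have img1: "(\<lambda>f. outw K f w) ` Fw \<subseteq> (\<lambda>f. innw K f w) ` Fw"
  proof
    fix b assume "b \<in> (\<lambda>f. outw K f w) ` Fw"
    then obtain f where f: "f \<in> Fw" and b: "b = outw K f w" by blast
    have "\<exists>g\<in>F. (b, w) \<in> dedges K g"
      using notbd[of b] outm[OF f] FwF f unfolding boundary_edge_def b by auto
    then obtain g where g: "g \<in> F" and e: "(b, w) \<in> dedges K g" by blast
    have wb1: "w \<noteq> K g!1" "w \<noteq> K g!3" using wnb wb_mem[OF g] by auto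
    have n02: "K g!0 \<noteq> K g!2" using neq[OF g, of 0 2] by simp
    from dedges_cases[OF e] wb1 have "(b = K g!3 \<and> w = K g!0) \<or> (b = K g!1 \<and> w = K g!2)" by auto
    then have "g \<in> Fw \<and> b = innw K g w" unfolding Fw_def innw_def using g n02 by auto
    then show "b \<in> (\<lambda>f. innw K f w) ` Fw" by blast
  qed
  have img2: "(\<lambda>f. innw K f w) ` Fw \<subseteq> (\<lambda>f. outw K f w) ` Fw"
  proof
    fix b assume "b \<in> (\<lambda>f. innw K f w) ` Fw"
    then obtain f where f: "f \<in> Fw" and b: "b = innw K f w" by blast
    have "\<exists>g\<in>F. (w, b) \<in> dedges K g"
      using notbd[of b] innm[OF f] FwF f unfolding boundary_edge_def b by auto
    then obtain g where g: "g \<in> F" and e: "(w, b) \<in> dedges K g" by blast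
    have wb1: "w \<noteq> K g!1" "w \<noteq> K g!3" using wnb wb_mem[OF g] by auto
    have n02: "K g!0 \<noteq> K g!2" using neq[OF g, of 0 2] by simp
    from dedges_cases[OF e] wb1 have "(b = K g!1 \<and> w = K g!0) \<or> (b = K g!3 \<and> w = K g!2)" by auto
    then have "g \<in> Fw \<and> b = outw K g w" unfolding Fw_def outw_def using g n02 by auto
    then show "b \<in> (\<lambda>f. outw K f w) ` Fw" by blast
  qed
  have kc: "\<forall>f\<in>Fw. kcfg (c w) (r w) (c (opw K f w)) (r (opw K f w)) (p (outw K f w)) (p (innw K f w)) (al f) s"
    using kf unfolding Fw_def opw_def outw_def innw_def by auto
  have cu: "\<forall>f\<in>Fw. cmod (c (opw K f w)) + r (opw K f w) < 1"
    using cb wb_mem[of _ F K] unfolding Fw_def opw_def by auto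
  have als: "\<forall>f\<in>Fw. 0 < al f \<and> al f < pi" using conjunct1[OF adm[unfolded admissible_def]] FwF by blast
  have cw: "cmod (c w) + r w < 1" "0 < r w" using cb rp w(1) by auto
  have ks: "(\<Sum>f\<in>Fw. 2 * \<bar>Arg ((p (outw K f w) - c w) / (c (opw K f w) - c w))\<bar>) = 2 * pi"
  proof -
    have ang: "(\<Sum>f\<in>{f\<in>F. K f ! 0 = w}. kite_angle K c p f 0) + (\<Sum>f\<in>{f\<in>F. K f ! 2 = w}. kite_angle K c p f 2) = 2 * pi"
      using conjunct2[OF conjunct2[OF cp[unfolded circle_pattern_def]]] w by blast
    have un: "Fw = {f\<in>F. K f ! 0 = w} \<union> {f\<in>F. K f ! 2 = w}" unfolding Fw_def by auto
    have dj: "{f\<in>F. K f ! 0 = w} \<inter> {f\<in>F. K f ! 2 = w} = {}" using neq[of _ 0 2] by fastforce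
    have s1: "(\<Sum>f\<in>{f\<in>F. K f ! 0 = w}. kite_angle K c p f 0) = (\<Sum>f\<in>{f\<in>F. K f ! 0 = w}. 2 * \<bar>Arg ((p (outw K f w) - c w) / (c (opw K f w) - c w))\<bar>)"
    proof (rule sum.cong[OF refl])
      fix f assume f: "f \<in> {f\<in>F. K f ! 0 = w}"
      then have f0: "K f!0 = w" by auto
      show "kite_angle K c p f 0 = 2 * \<bar>Arg ((p (outw K f w) - c w) / (c (opw K f w) - c w))\<bar>"
      proof -
        have m2: "((0::nat) + 2) mod 4 = 2" by arith
        show ?thesis unfolding kite_angle_def m2 outw_def opw_def using f0 by simp
      qed
    qed
    have s2: "(\<Sum>f\<in>{f\<in>F. K f ! 2 = w}. kite_angle K c p f 2) = (\<Sum>f\<in>{f\<in>F. K f ! 2 = w}. 2 * \<bar>Arg ((p (outw K f w) - c w) / (c (opw K f w) - c w))\<bar>)"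
    proof (rule sum.cong[OF refl])
      fix f assume f: "f \<in> {f\<in>F. K f ! 2 = w}"
      then have fF: "f \<in> F" and f2: "K f!2 = w" by auto
      have f0: "K f!0 \<noteq> w" using neq[OF fF, of 0 2] f2 by auto
      have k: "kcfg (c (K f!2)) (r (K f!2)) (c (K f!0)) (r (K f!0)) (p (K f!3)) (p (K f!1)) (al f) s" using kf fF by auto
      have a: "0 < al f" "al f < pi" using als f unfolding Fw_def by auto
      have "kite_angle K c p f 2 = 2 * \<bar>Arg ((p (K f!1) - c (K f!2)) / (c (K f!0) - c (K f!2)))\<bar>"
        by (simp add: kite_angle_def)
      also have "\<dots> = 2 * \<bar>Arg ((p (K f!3) - c (K f!2)) / (c (K f!0) - c (K f!2)))\<bar>"
        using kite_lemma(1)[OF k a s] by simp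
      finally show "kite_angle K c p f 2 = 2 * \<bar>Arg ((p (outw K f w) - c w) / (c (opw K f w) - c w))\<bar>"
        unfolding outw_def opw_def using f0 f2 by simp
    qed
    have fin1: "finite {f\<in>F. K f ! 0 = w}" "finite {f\<in>F. K f ! 2 = w}" using finF by auto
    show ?thesis unfolding un sum.union_disjoint[OF fin1 dj] using ang s1 s2 by simp
  qed
  have fin: "finite Fw" using finF FwF finite_subset by blast
  have io3: "(\<lambda>f. outw K f w) ` Fw = (\<lambda>f. innw K f w) ` Fw" using img1 img2 by (rule subset_antisym)
  have "(\<Sum>f\<in>Fw. 2 * thk (tt (c w) (r w)) (tt (c (opw K f w)) (r (opw K f w))) (al f)) = 2 * pi"
    by (rule winding[OF fin inj1 inj2 io3 cw cu als kc s ks])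
  then show ?thesis unfolding Fw_def .
qed


lemma face_cmp:
  fixes t t' :: "'v \<Rightarrow> real"
  assumes ne: "wa \<noteq> wb"
    and tr: "\<And>w. w \<in> {wa, wb} \<Longrightarrow> 0 < t w \<and> t w < 1 \<and> 0 < t' w \<and> t' w < 1"
    and al: "0 < al" "al < pi"
    and V1: "\<And>w. w \<in> {wa, wb} \<Longrightarrow> w \<in> V \<Longrightarrow> t' w < t w"
    and V2: "\<And>w. w \<in> {wa, wb} \<Longrightarrow> w \<notin> V \<Longrightarrow> t w \<le> t' w"
  shows "(\<Sum>w\<in>{w\<in>V. wa = w \<or> wb = w}. 2 * thk (t w) (t (if wa = w then wb else wa)) al)
       \<le> (\<Sum>w\<in>{w\<in>V. wa = w \<or> wb = w}. 2 * thk (t' w) (t' (if wa = w then wb else wa)) al)"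
    and "wa \<in> V \<or> wb \<in> V \<Longrightarrow>
         (\<Sum>w\<in>{w\<in>V. wa = w \<or> wb = w}. 2 * thk (t w) (t (if wa = w then wb else wa)) al)
       < (\<Sum>w\<in>{w\<in>V. wa = w \<or> wb = w}. 2 * thk (t' w) (t' (if wa = w then wb else wa)) al)"
proof -
  have t0: "0 < t wa" "t wa < 1" "0 < t' wa" "t' wa < 1" using tr[of wa] by auto
  have t2: "0 < t wb" "t wb < 1" "0 < t' wb" "t' wb < 1" using tr[of wb] by auto
  have ne': "wb \<noteq> wa" using ne by simp
  define L where "L = (\<Sum>w\<in>{w\<in>V. wa = w \<or> wb = w}. 2 * thk (t w) (t (if wa = w then wb else wa)) al)"
  define R where "R = (\<Sum>w\<in>{w\<in>V. wa = w \<or> wb = w}. 2 * thk (t' w) (t' (if wa = w then wb else wa)) al)"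
  have main: "L \<le> R \<and> (wa \<in> V \<or> wb \<in> V \<longrightarrow> L < R)"
  proof (cases "wa \<in> V")
    case True
    note a = True
    show ?thesis
    proof (cases "wb \<in> V")
      case True
      have S: "{w\<in>V. wa = w \<or> wb = w} = {wa, wb}" using a True by auto
      have "thk (t wa) (t wb) al + thk (t wb) (t wa) al < thk (t' wa) (t' wb) al + thk (t' wb) (t' wa) al"
        by (rule thk_sum_mono) (use t0 t2 V1[of wa] V1[of wb] a True al in auto)
      then have "L < R" unfolding L_def R_def S using ne ne' by simp
      then show ?thesis by simp
    next
      case False
      have S: "{w\<in>V. wa = w \<or> wb = w} = {wa}" using a False by auto
      have "thk (t wa) (t wb) al < thk (t' wa) (t' wb) al"
        by (rule thk_mono) (use t0 t2 V1[of wa] V2[of wb] a False al in auto)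
      then have "L < R" unfolding L_def R_def S by simp
      then show ?thesis by simp
    qed
  next
    case False
    note a = False
    show ?thesis
    proof (cases "wb \<in> V")
      case True
      have S: "{w\<in>V. wa = w \<or> wb = w} = {wb}" using a True by auto
      have "thk (t wb) (t wa) al < thk (t' wb) (t' wa) al"
        by (rule thk_mono) (use t0 t2 V1[of wb] V2[of wa] a True al in auto)
      then have "L < R" unfolding L_def R_def S using ne' by simp
      then show ?thesis by simp
    next
      case False
      have S: "{w\<in>V. wa = w \<or> wb = w} = {}" using a False by auto
      show ?thesis unfolding L_def R_def S using a False by simp
    qed
  qed
  then show "L \<le> R" "wa \<in> V \<or> wb \<in> V \<Longrightarrow> L < R" by auto
qed

theorem lemma3p1:
  fixes F :: "'f set" and K :: "'f \<Rightarrow> 'v list" and \<alpha> :: "'f \<Rightarrow> real"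
    and c c' :: "'v \<Rightarrow> complex" and r r' :: "'v \<Rightarrow> real" and p p' :: "'v \<Rightarrow> complex"
  assumes "b_quad_graph F K"
    and "admissible F K \<alpha>"
    and "circle_pattern F K \<alpha> c r p"
    and "circle_pattern F K \<alpha> c' r' p'"
    and "\<forall>w\<in>white_verts F K. {z. cmod (z - c w) = r w} \<subseteq> {z. cmod z < 1}"
    and "\<forall>w\<in>white_verts F K. {z. cmod (z - c' w) = r' w} \<subseteq> {z. cmod z < 1}"
    and "\<forall>w\<in>white_verts F K \<inter> boundary_verts F K. hyp_radius (c' w) (r' w) \<ge> hyp_radius (c w) (r w)"
  shows "\<forall>w\<in>white_verts F K. hyp_radius (c' w) (r' w) \<ge> hyp_radius (c w) (r w)"
proof -
  note bq = assms(1) and adm = assms(2) and cp = assms(3) and cp' = assms(4)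
    and D = assms(5) and D' = assms(6) and bd = assms(7)
  define t where "t w = tt (c w) (r w)" for w
  define t' where "t' w = tt (c' w) (r' w)" for w
  have rp: "\<forall>v\<in>white_verts F K. 0 < r v" using conjunct1[OF cp[unfolded circle_pattern_def]] .
  have rp': "\<forall>v\<in>white_verts F K. 0 < r' v" using conjunct1[OF cp'[unfolded circle_pattern_def]] .
  have cb: "\<And>v. v \<in> white_verts F K \<Longrightarrow> cmod (c v) + r v < 1" using circ_disc_bound rp D by blast
  have cb': "\<And>v. v \<in> white_verts F K \<Longrightarrow> cmod (c' v) + r' v < 1" using circ_disc_bound rp' D' by blast
  have hr: "\<And>v. v \<in> white_verts F K \<Longrightarrow> hyp_radius (c v) (r v) = 2 * artanh (t v)"
    unfolding t_def using hyp_radius_eq cb rp by blast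
  have hr': "\<And>v. v \<in> white_verts F K \<Longrightarrow> hyp_radius (c' v) (r' v) = 2 * artanh (t' v)"
    unfolding t'_def using hyp_radius_eq cb' rp' by blast
  have tr: "\<And>v. v \<in> white_verts F K \<Longrightarrow> 0 < t v \<and> t v < 1 \<and> 0 < t' v \<and> t' v < 1"
    unfolding t_def t'_def using tt_props cb rp cb' rp' by blast
  have cmpeq: "\<And>v. v \<in> white_verts F K \<Longrightarrow> (hyp_radius (c v) (r v) \<le> hyp_radius (c' v) (r' v) \<longleftrightarrow> t v \<le> t' v)"
  proof -
    fix v assume v: "v \<in> white_verts F K"
    have a: "0 < t v" "t v < 1" "0 < t' v" "t' v < 1" using tr[OF v] by auto
    show "(hyp_radius (c v) (r v) \<le> hyp_radius (c' v) (r' v) \<longleftrightarrow> t v \<le> t' v)"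
      unfolding hr[OF v] hr'[OF v] using artanh_less[of "t v" "t' v"] artanh_less[of "t' v" "t v"] a
      by (smt (verit))
  qed
  show ?thesis
  proof (rule ccontr)
    assume "\<not> ?thesis"
    then obtain w0 where w0: "w0 \<in> white_verts F K" and lt: "\<not> hyp_radius (c w0) (r w0) \<le> hyp_radius (c' w0) (r' w0)"
      by auto
    define V where "V = {w \<in> white_verts F K. t' w < t w}"
    have w0V: "w0 \<in> V" unfolding V_def using w0 lt cmpeq[OF w0] by auto
    have Vsub: "V \<subseteq> white_verts F K" unfolding V_def by auto
    have finF: "finite F" using bq_facts(1)[OF bq] .
    have lenK: "\<And>f. f \<in> F \<Longrightarrow> length (K f) = 4 \<and> distinct (K f)" using bq_facts(2)[OF bq] .
    have finW: "finite (white_verts F K)"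
    proof -
      have "white_verts F K = (\<lambda>f. K f ! 0) ` F \<union> (\<lambda>f. K f ! 2) ` F" unfolding white_verts_def by auto
      then show ?thesis using finF by simp
    qed
    have finV: "finite V" using finW Vsub finite_subset by blast
    have Vint: "\<And>w. w \<in> V \<Longrightarrow> w \<in> interior_verts F K"
    proof -
      fix w assume wV: "w \<in> V"
      then have ww: "w \<in> white_verts F K" and tl: "t' w < t w" unfolding V_def by auto
      have nb: "w \<notin> boundary_verts F K"
      proof
        assume "w \<in> boundary_verts F K"
        then have "hyp_radius (c w) (r w) \<le> hyp_radius (c' w) (r' w)" using bd ww by auto
        then show False using cmpeq[OF ww] tl by simp
      qed
      obtain f where f: "f \<in> F" and fw: "K f ! 0 = w \<or> K f ! 2 = w" using ww unfolding white_verts_def by auto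
      have "w \<in> set (K f)" using fw lenK[OF f] nth_mem[of 0 "K f"] nth_mem[of 2 "K f"] by auto
      then show "w \<in> interior_verts F K" unfolding interior_verts_def using f nb by blast
    qed
    define g where "g tt w f = 2 * thk (tt w) (tt (opw K f w)) (\<alpha> f)" for tt :: "'v \<Rightarrow> real" and w f
    define R where "R w f = (K f ! 0 = w \<or> K f ! 2 = w)" for w f
    have ws: "\<And>w. w \<in> V \<Longrightarrow> (\<Sum>f\<in>{f\<in>F. R w f}. g t w f) = 2 * pi \<and> (\<Sum>f\<in>{f\<in>F. R w f}. g t' w f) = 2 * pi"
    proof -
      fix w assume wV: "w \<in> V"
      have ww: "w \<in> white_verts F K" using wV Vsub by auto
      show "(\<Sum>f\<in>{f\<in>F. R w f}. g t w f) = 2 * pi \<and> (\<Sum>f\<in>{f\<in>F. R w f}. g t' w f) = 2 * pi"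
        unfolding g_def R_def t_def t'_def
        using hyp_angle_sum[OF bq adm cp D ww Vint[OF wV]] hyp_angle_sum[OF bq adm cp' D' ww Vint[OF wV]]
        by simp
    qed
    have eqs: "(\<Sum>w\<in>V. \<Sum>f\<in>{f\<in>F. R w f}. g t w f) = (\<Sum>w\<in>V. \<Sum>f\<in>{f\<in>F. R w f}. g t' w f)"
    proof (rule sum.cong[OF refl])
      fix w assume "w \<in> V"
      then show "(\<Sum>f\<in>{f\<in>F. R w f}. g t w f) = (\<Sum>f\<in>{f\<in>F. R w f}. g t' w f)" using ws by simp
    qed
    have sw: "\<And>tt. (\<Sum>w\<in>V. \<Sum>f\<in>{f\<in>F. R w f}. g tt w f) = (\<Sum>f\<in>F. \<Sum>w\<in>{w\<in>V. R w f}. g tt w f)"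
      by (rule sum.swap_restrict[OF finV finF])
    have lt2: "(\<Sum>f\<in>F. \<Sum>w\<in>{w\<in>V. R w f}. g t w f) < (\<Sum>f\<in>F. \<Sum>w\<in>{w\<in>V. R w f}. g t' w f)"
    proof (rule sum_strict_mono_ex1[OF finF])
      have fc: "\<And>f. f \<in> F \<Longrightarrow>
        (\<Sum>w\<in>{w\<in>V. R w f}. g t w f) \<le> (\<Sum>w\<in>{w\<in>V. R w f}. g t' w f) \<and>
        (K f ! 0 \<in> V \<or> K f ! 2 \<in> V \<longrightarrow> (\<Sum>w\<in>{w\<in>V. R w f}. g t w f) < (\<Sum>w\<in>{w\<in>V. R w f}. g t' w f))"
      proof -
        fix f assume f: "f \<in> F"
        have ne: "K f ! 0 \<noteq> K f ! 2" using lenK[OF f] dist4[of "K f" 0 2] by simp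
        have wh: "K f ! 0 \<in> white_verts F K" "K f ! 2 \<in> white_verts F K" using wb_mem[OF f] by auto
        have al: "0 < \<alpha> f" "\<alpha> f < pi" using conjunct1[OF adm[unfolded admissible_def]] f by auto
        have tr2: "\<And>w. w \<in> {K f ! 0, K f ! 2} \<Longrightarrow> 0 < t w \<and> t w < 1 \<and> 0 < t' w \<and> t' w < 1"
          using tr wh by auto
        have V1: "\<And>w. w \<in> {K f ! 0, K f ! 2} \<Longrightarrow> w \<in> V \<Longrightarrow> t' w < t w" unfolding V_def by auto
        have V2: "\<And>w. w \<in> {K f ! 0, K f ! 2} \<Longrightarrow> w \<notin> V \<Longrightarrow> t w \<le> t' w" unfolding V_def using wh by auto
        have gg: "\<And>tt. (\<Sum>w\<in>{w\<in>V. R w f}. g tt w f) = (\<Sum>w\<in>{w\<in>V. K f ! 0 = w \<or> K f ! 2 = w}. 2 * thk (tt w) (tt (if K f ! 0 = w then K f ! 2 else K f ! 0)) (\<alpha> f))"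
          unfolding g_def R_def opw_def ..
        show "(\<Sum>w\<in>{w\<in>V. R w f}. g t w f) \<le> (\<Sum>w\<in>{w\<in>V. R w f}. g t' w f) \<and>
        (K f ! 0 \<in> V \<or> K f ! 2 \<in> V \<longrightarrow> (\<Sum>w\<in>{w\<in>V. R w f}. g t w f) < (\<Sum>w\<in>{w\<in>V. R w f}. g t' w f))"
          unfolding gg
          using face_cmp[where wa="K f ! 0" and wb="K f ! 2" and t=t and t'=t' and al="\<alpha> f" and V=V, OF ne tr2 al V1 V2]
          by blast
      qed
      show "\<forall>f\<in>F. (\<Sum>w\<in>{w\<in>V. R w f}. g t w f) \<le> (\<Sum>w\<in>{w\<in>V. R w f}. g t' w f)" using fc by blast
      obtain f where f: "f \<in> F" and fw: "K f ! 0 = w0 \<or> K f ! 2 = w0" using w0 unfolding white_verts_def by auto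
      have "K f ! 0 \<in> V \<or> K f ! 2 \<in> V" using fw w0V by auto
      then show "\<exists>f\<in>F. (\<Sum>w\<in>{w\<in>V. R w f}. g t w f) < (\<Sum>w\<in>{w\<in>V. R w f}. g t' w f)" using fc f by blast
    qed
    show False using eqs sw[of t] sw[of t'] lt2 by simp
  qed
qed

end
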